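(* Let $S_1,\dots,S_m\subseteq\mathbb{F}_q$ with $\#S_1=\cdots=\#S_m=s$, and let $X_1^{i_1}X_2^{i_2}\cdots X_m^{i_m}\in\Delta(s,\dots,s)$ with $i_1\le i_2$. Let $$L_1=\{N\in\Delta(s,\dots,s)\mid N\preceq_{\deg}X_1^{i_1}X_2^{i_2}X_3^{i_3}\cdots X_m^{i_m}\},\quad L_2=\{N\in\Delta(s,\dots,s)\mid N\prec_{\deg}X_1^{i_2}X_2^{i_1}X_3^{i_3}\cdots X_m^{i_m}\}.$$ Then $C(L_1)$, $C(L_2)$ have length $n=s^m$ and codimension $\ell=i_2-i_1+1$, and $$M_1(C(L_1),C(L_2))=(s-i_1)\cdots(s-i_m),\qquad M_1(C(L_2)^\perp,C(L_1)^\perp)\ge(i_1+1)\cdots(i_m+1).$$ Moreover, letting $T=\{X_1^{i_2-w}X_2^{i_1+w}X_3^{i_3}\cdots X_m^{i_m}\mid w=0,\dots,i_2-i_1\}$, for $v=2,\dots,\ell$: $$M_v(C(L_1),C(L_2))=\min\{D(K)\mid K\subseteq T,\ \#K=v\},\qquad M_v(C(L_2)^\perp,C(L_1)^\perp)\ge\min\{D^\perp(K)\mid K\subseteq T,\ \#K=v\}.$$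
   Context: $q$ is a prime power. $S=S_1\times\cdots\times S_m=\{\alpha_1,\dots,\alpha_n\}$, $n=s^m$. $\Delta(s,\dots,s)=\{X_1^{a_1}\cdots X_m^{a_m}\mid 0\le a_t<s\}$. For $L\subseteq\Delta(s,\dots,s)$, $C(L)\subseteq\mathbb{F}_q^n$ is the span of $(N(\alpha_1),\dots,N(\alpha_n))$, $N\in L$; $C^\perp$ is the Euclidean dual. $\prec_{\deg}$ is the degree lexicographic ordering: $X_1^{a_1}\cdots X_m^{a_m}\prec_{\deg}X_1^{b_1}\cdots X_m^{b_m}$ iff either $\sum a_t<\sum b_t$, or $\sum a_t=\sum b_t$ and the rightmost nonzero entry of $(b_1-a_1,\dots,b_m-a_m)$ is positive. For $K\subseteq\Delta(s,\dots,s)$: $D(K)=\#\{N\in\Delta(s,\dots,s)\mid N$ is divisible by some $M\in K\}$, $D^\perp(K)=\#\{N\in\Delta(s,\dots,s)\mid N$ divides some $M\in K\}$. For linear codes $C_2\subsetneq C_1\subseteq\mathbb{F}_q^n$ and $1\le v\le\dim C_1-\dim C_2$, $M_v(C_1,C_2)=\min\{\#\mathrm{Supp}\,U\mid U\subseteq C_1\text{ subspace},\ \dim U=v,\ U\cap C_2=\{\vec0\}\}$, with $\mathrm{Supp}\,U$ the set of coordinates where some word of $U$ is nonzero. *)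

theory Defs
  imports Complex_Main "HOL-Library.Function_Algebras" "HOL-Library.FuncSet"
begin

(* Words of length n are functions from the evaluation-point set P to F_q
   (extended by 0 outside P).  Scalar multiplication on words: *)
definition scaleF :: "'a::field \<Rightarrow> ('b \<Rightarrow> 'a) \<Rightarrow> ('b \<Rightarrow> 'a)" where
  "scaleF c f = (\<lambda>x. c * f x)"

lemma vector_space_scaleF: "vector_space (scaleF :: 'a::field \<Rightarrow> ('b \<Rightarrow> 'a) \<Rightarrow> _)"
  by unfold_locales (auto simp: scaleF_def fun_eq_iff algebra_simps)

abbreviation fdim :: "('b \<Rightarrow> 'a::field) set \<Rightarrow> nat" where
  "fdim \<equiv> vector_space.dim scaleF"

abbreviation fspan :: "('b \<Rightarrow> 'a::field) set \<Rightarrow> ('b \<Rightarrow> 'a) set" where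
  "fspan \<equiv> module.span scaleF"

abbreviation fsubspace :: "('b \<Rightarrow> 'a::field) set \<Rightarrow> bool" where
  "fsubspace \<equiv> module.subspace scaleF"

(* Exponent vectors (a_1,...,a_m) are functions nat => nat, with entries
   a t for t in {1..m} and 0 elsewhere.  Delta(s,...,s): *)
definition Delta :: "nat \<Rightarrow> nat \<Rightarrow> (nat \<Rightarrow> nat) set" where
  "Delta m s = {a. (\<forall>t\<in>{1..m}. a t < s) \<and> (\<forall>t. t \<notin> {1..m} \<longrightarrow> a t = 0)}"

definition deglex_less :: "nat \<Rightarrow> (nat \<Rightarrow> nat) \<Rightarrow> (nat \<Rightarrow> nat) \<Rightarrow> bool" where
  "deglex_less m a b \<longleftrightarrow>
     (\<Sum>t=1..m. a t) < (\<Sum>t=1..m. b t) \<or>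
     ((\<Sum>t=1..m. a t) = (\<Sum>t=1..m. b t) \<and>
      (\<exists>t\<in>{1..m}. a t < b t \<and> (\<forall>u\<in>{t<..m}. a u = b u)))"

definition deglex_le :: "nat \<Rightarrow> (nat \<Rightarrow> nat) \<Rightarrow> (nat \<Rightarrow> nat) \<Rightarrow> bool" where
  "deglex_le m a b \<longleftrightarrow> deglex_less m a b \<or> a = b"

definition points :: "nat \<Rightarrow> (nat \<Rightarrow> 'a set) \<Rightarrow> (nat \<Rightarrow> 'a) set" where
  "points m S = PiE {1..m} S"

definition evalmon :: "nat \<Rightarrow> (nat \<Rightarrow> 'a::field set) \<Rightarrow> (nat \<Rightarrow> nat) \<Rightarrow> ((nat \<Rightarrow> 'a) \<Rightarrow> 'a)" where
  "evalmon m S a = (\<lambda>p. if p \<in> points m S then (\<Prod>t\<in>{1..m}. p t ^ a t) else 0)"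

definition evcode :: "nat \<Rightarrow> (nat \<Rightarrow> 'a::field set) \<Rightarrow> (nat \<Rightarrow> nat) set \<Rightarrow> ((nat \<Rightarrow> 'a) \<Rightarrow> 'a) set" where
  "evcode m S L = fspan (evalmon m S ` L)"

definition dualcode :: "'b set \<Rightarrow> ('b \<Rightarrow> 'a::field) set \<Rightarrow> ('b \<Rightarrow> 'a) set" where
  "dualcode P C = {y. (\<forall>p. p \<notin> P \<longrightarrow> y p = 0) \<and> (\<forall>x\<in>C. (\<Sum>p\<in>P. x p * y p) = 0)}"

definition Supp :: "('b \<Rightarrow> 'a::zero) set \<Rightarrow> 'b set" where
  "Supp U = {p. \<exists>u\<in>U. u p \<noteq> 0}"

definition RGHW :: "nat \<Rightarrow> ('b \<Rightarrow> 'a::field) set \<Rightarrow> ('b \<Rightarrow> 'a) set \<Rightarrow> nat" where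
  "RGHW v C1 C2 = Min {card (Supp U) | U. fsubspace U \<and> U \<subseteq> C1 \<and> fdim U = v \<and> U \<inter> C2 = {0}}"

definition mdvd :: "(nat \<Rightarrow> nat) \<Rightarrow> (nat \<Rightarrow> nat) \<Rightarrow> bool" where
  "mdvd a b \<longleftrightarrow> (\<forall>t. a t \<le> b t)"

definition Dfoot :: "nat \<Rightarrow> nat \<Rightarrow> (nat \<Rightarrow> nat) set \<Rightarrow> nat" where
  "Dfoot m s K = card {N \<in> Delta m s. \<exists>M\<in>K. mdvd M N}"

definition Dperp :: "nat \<Rightarrow> nat \<Rightarrow> (nat \<Rightarrow> nat) set \<Rightarrow> nat" where
  "Dperp m s K = card {N \<in> Delta m s. \<exists>M\<in>K. mdvd N M}"

end

theory Submission
  imports Defs "HOL-Computational_Algebra.Polynomial"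
begin


definition Zm :: "nat \<Rightarrow> (nat \<Rightarrow> nat) set" where
  "Zm m = {a. \<forall>t. t \<notin> {1..m} \<longrightarrow> a t = 0}"

lemma Delta_Zm: "Delta m s \<subseteq> Zm m" by (auto simp: Delta_def Zm_def)

lemma lt_irrefl: "\<not> deglex_less m a a"
  by (auto simp: deglex_less_def)

lemma lt_deg: "(\<Sum>t=1..m. a t) < (\<Sum>t=1..m. b t) \<Longrightarrow> deglex_less m a b"
  by (simp add: deglex_less_def)

lemma lt_deg_le: "deglex_less m a b \<Longrightarrow> (\<Sum>t=1..m. a t) \<le> (\<Sum>t=1..m. b t)"
  by (auto simp: deglex_less_def)

lemma lt_trans:
  assumes "deglex_less m a b" "deglex_less m b c" shows "deglex_less m a c"
proof -
  have d1: "(\<Sum>t=1..m. a t) \<le> (\<Sum>t=1..m. b t)" "(\<Sum>t=1..m. b t) \<le> (\<Sum>t=1..m. c t)"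
    using assms lt_deg_le by blast+
  show ?thesis
  proof (cases "(\<Sum>t=1..m. a t) < (\<Sum>t=1..m. c t)")
    case True then show ?thesis by (rule lt_deg)
  next
    case False
    then have e: "(\<Sum>t=1..m. a t) = (\<Sum>t=1..m. b t)" "(\<Sum>t=1..m. b t) = (\<Sum>t=1..m. c t)"
      using d1 by linarith+
    from assms(1) e obtain t1 where t1: "t1\<in>{1..m}" "a t1 < b t1" "\<forall>u\<in>{t1<..m}. a u = b u"
      by (auto simp: deglex_less_def)
    from assms(2) e obtain t2 where t2: "t2\<in>{1..m}" "b t2 < c t2" "\<forall>u\<in>{t2<..m}. b u = c u"
      by (auto simp: deglex_less_def)
    have "\<exists>t\<in>{1..m}. a t < c t \<and> (\<forall>u\<in>{t<..m}. a u = c u)"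
    proof (cases t1 t2 rule: linorder_cases)
      case less then show ?thesis using t1 t2 by (intro bexI[of _ t2]) auto
    next
      case equal then show ?thesis using t1 t2 by (intro bexI[of _ t2]) auto
    next
      case greater then show ?thesis using t1 t2 by (intro bexI[of _ t1]) auto
    qed
    then show ?thesis using e by (simp add: deglex_less_def)
  qed
qed

lemma lt_total:
  assumes "a \<in> Zm m" "b \<in> Zm m" "a \<noteq> b"
  shows "deglex_less m a b \<or> deglex_less m b a"
proof (cases "(\<Sum>t=1..m. a t) = (\<Sum>t=1..m. b t)")
  case False then show ?thesis by (auto simp: deglex_less_def)
next
  case True
  have ex: "\<exists>t\<in>{1..m}. a t \<noteq> b t"
  proof (rule ccontr)
    assume "\<not> ?thesis"
    then have "a = b" using assms(1,2) by (auto simp: Zm_def fun_eq_iff)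
    then show False using assms(3) by simp
  qed
  define D where "D = {t\<in>{1..m}. a t \<noteq> b t}"
  have fD: "finite D" "D \<noteq> {}" using ex by (auto simp: D_def)
  define t0 where "t0 = Max D"
  have t0: "t0 \<in> D" using fD by (simp add: t0_def)
  have above: "\<forall>u\<in>{t0<..m}. a u = b u"
  proof
    fix u assume u: "u \<in> {t0<..m}"
    show "a u = b u"
    proof (rule ccontr)
      assume "a u \<noteq> b u"
      then have "u \<in> D" using u t0 by (auto simp: D_def)
      then have "u \<le> t0" using fD by (simp add: t0_def)
      then show False using u by auto
    qed
  qed
  have "a t0 < b t0 \<or> b t0 < a t0" using t0 by (auto simp: D_def)
  then show ?thesis using True t0 above by (auto simp: deglex_less_def D_def)
qed

lemma lt_add:
  assumes "deglex_less m a b" shows "deglex_less m (a + d) (b + d)"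
  using assms by (auto simp: deglex_less_def sum.distrib)

lemma le_trans_lt: "deglex_le m a b \<Longrightarrow> deglex_less m b c \<Longrightarrow> deglex_less m a c"
  by (auto simp: deglex_le_def intro: lt_trans)

lemma lt_trans_le: "deglex_less m a b \<Longrightarrow> deglex_le m b c \<Longrightarrow> deglex_less m a c"
  by (auto simp: deglex_le_def intro: lt_trans)

lemma mdvd_lt:
  assumes "a \<in> Zm m" "b \<in> Zm m" "mdvd b a" "b \<noteq> a"
  shows "deglex_less m b a"
proof -
  obtain t where t: "b t \<noteq> a t" using assms(4) by auto
  have tm: "t \<in> {1..m}"
  proof (rule ccontr)
    assume "t \<notin> {1..m}"
    then show False using t assms(1,2) by (simp add: Zm_def)
  qed
  have "(\<Sum>u=1..m. b u) < (\<Sum>u=1..m. a u)"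
    using assms(3) t tm by (intro sum_strict_mono_ex1) (auto simp: mdvd_def le_less)
  then show ?thesis by (rule lt_deg)
qed


interpretation fv: vector_space "scaleF :: 'a::field \<Rightarrow> ('b \<Rightarrow> 'a) \<Rightarrow> ('b \<Rightarrow> 'a)"
  by (rule vector_space_scaleF)

lemma scaleF_apply[simp]: "scaleF c f x = c * f x" by (simp add: scaleF_def)

lemma sum_fun_apply: "(\<Sum>i\<in>A. f i) x = (\<Sum>i\<in>A. f i x)"
  by (induct A rule: infinite_finite_induct) auto

lemma fdim_le_span:
  fixes X Y F :: "('b \<Rightarrow> 'a::field) set"
  assumes "X \<subseteq> fspan Y" "Y \<subseteq> fspan F" "finite F"
  shows "fdim X \<le> fdim Y"
proof -
  obtain B where B: "B \<subseteq> Y" "fv.independent B" "Y \<subseteq> fspan B" "card B = fdim Y"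
    by (rule fv.basis_exists)
  have fB: "finite B" using fv.independent_span_bound[OF assms(3) B(2)] B(1) assms(2) by auto
  have "fspan Y \<subseteq> fspan B" using B(3) fv.span_minimal fv.subspace_span by blast
  then have "X \<subseteq> fspan B" using assms(1) by blast
  then have "fdim X \<le> card B" using fB fv.dim_le_card by blast
  then show ?thesis using B(4) by simp
qed

lemma fdim_le_insert:
  fixes X Y F :: "('b \<Rightarrow> 'a::field) set"
  assumes "X \<subseteq> fspan (insert x Y)" "Y \<subseteq> fspan F" "finite F"
  shows "fdim X \<le> fdim Y + 1"
proof -
  obtain B where B: "B \<subseteq> Y" "fv.independent B" "Y \<subseteq> fspan B" "card B = fdim Y"
    by (rule fv.basis_exists)
  have fB: "finite B" using fv.independent_span_bound[OF assms(3) B(2)] B(1) assms(2) by auto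
  have "insert x Y \<subseteq> fspan (insert x B)"
    using B(3) fv.span_mono[of B "insert x B"] fv.span_base[of x "insert x B"] by blast
  then have "fspan (insert x Y) \<subseteq> fspan (insert x B)" using fv.span_minimal fv.subspace_span by blast
  then have "X \<subseteq> fspan (insert x B)" using assms(1) by blast
  then have "fdim X \<le> card (insert x B)" using fB fv.dim_le_card by blast
  also have "\<dots> \<le> card B + 1" using fB by (simp add: card_insert_if)
  finally show ?thesis using B(4) by simp
qed

lemma ext_bij:
  "bij_betw (\<lambda>h t. if t \<in> A then h t else (0::nat)) (PiE A B)
     {a. (\<forall>t\<in>A. a t \<in> B t) \<and> (\<forall>t. t \<notin> A \<longrightarrow> a t = 0)}"
proof (rule bij_betw_byWitness[where f' = "\<lambda>a. restrict a A"])
  show "\<forall>h\<in>PiE A B. restrict (\<lambda>t. if t \<in> A then h t else 0) A = h"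
    by (auto simp: fun_eq_iff PiE_def extensional_def)
  show "\<forall>a\<in>{a. (\<forall>t\<in>A. a t \<in> B t) \<and> (\<forall>t. t \<notin> A \<longrightarrow> a t = 0)}.
          (\<lambda>t. if t \<in> A then restrict a A t else 0) = a"
    by (auto simp: fun_eq_iff)
  show "(\<lambda>h t. if t \<in> A then h t else 0) ` PiE A B
          \<subseteq> {a. (\<forall>t\<in>A. a t \<in> B t) \<and> (\<forall>t. t \<notin> A \<longrightarrow> a t = 0)}"
    by (auto simp: PiE_def)
  show "(\<lambda>a. restrict a A) ` {a. (\<forall>t\<in>A. a t \<in> B t) \<and> (\<forall>t. t \<notin> A \<longrightarrow> a t = 0)} \<subseteq> PiE A B"
    by auto
qed

lemma Delta_eq: "Delta m s = {a. (\<forall>t\<in>{1..m}. a t \<in> {..<s}) \<and> (\<forall>t. t \<notin> {1..m} \<longrightarrow> a t = 0)}"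
  by (auto simp: Delta_def)

lemma Delta_bij: "bij_betw (\<lambda>h t. if t \<in> {1..m} then h t else (0::nat)) (PiE {1..m} (\<lambda>_. {..<s})) (Delta m s)"
  unfolding Delta_eq by (rule ext_bij)

lemma card_Delta: "card (Delta m s) = s ^ m"
  using bij_betw_same_card[OF Delta_bij[of m s]] by (simp add: card_PiE)

lemma finite_Delta: "finite (Delta m s)"
proof -
  have "finite (PiE {1..m} (\<lambda>_::nat. {..<s}))" by (simp add: finite_PiE)
  then show ?thesis using bij_betw_finite[OF Delta_bij[of m s]] by simp
qed


locale grid =
  fixes m s :: nat and S :: "nat \<Rightarrow> 'a::{field,finite} set"
  assumes cardS: "\<forall>t\<in>{1..m}. card (S t) = s" and spos: "0 < s"
begin

abbreviation "E \<equiv> evalmon m S"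
abbreviation "P \<equiv> points m S"
abbreviation "Dl \<equiv> Delta m s"

definition VP :: "((nat \<Rightarrow> 'a) \<Rightarrow> 'a) set" where "VP = {f. \<forall>p. p \<notin> P \<longrightarrow> f p = 0}"
definition dl :: "(nat \<Rightarrow> 'a) \<Rightarrow> ((nat \<Rightarrow> 'a) \<Rightarrow> 'a)" where "dl q = (\<lambda>p. if p = q then 1 else 0)"

lemma finite_P: "finite P" unfolding points_def by (simp add: finite_PiE)

lemma card_P: "card P = s ^ m"
  using cardS by (simp add: points_def card_PiE)

lemma E_out: "p \<notin> P \<Longrightarrow> E a p = 0" by (simp add: evalmon_def)
lemma E_in: "p \<in> P \<Longrightarrow> E a p = (\<Prod>t\<in>{1..m}. p t ^ a t)" by (simp add: evalmon_def)

lemma subspace_VP: "fsubspace VP"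
  by (auto simp: VP_def fv.subspace_def scaleF_def)

lemma E_VP: "E a \<in> VP" by (simp add: VP_def E_out)

lemma span_E_VP: "fspan (E ` A) \<subseteq> VP"
  using fv.span_minimal[OF _ subspace_VP] E_VP by blast

lemma poly_sum_s:
  fixes g :: "'a poly" assumes "degree g < s"
  shows "poly g y = (\<Sum>k<s. coeff g k * y ^ k)"
proof -
  have "poly g y = (\<Sum>k\<le>degree g. coeff g k * y ^ k)" by (rule poly_altdef)
  also have "\<dots> = (\<Sum>k<s. coeff g k * y ^ k)"
    using assms by (intro sum.mono_neutral_left) (auto simp: coeff_eq_0)
  finally show ?thesis .
qed

lemma prod_formula:
  assumes deg: "\<forall>t\<in>{1..m}. degree (g t) < s"
  shows "(\<lambda>p. if p \<in> P then \<Prod>t\<in>{1..m}. poly (g t) (p t) else 0)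
       = (\<Sum>b\<in>Dl. scaleF (\<Prod>t\<in>{1..m}. coeff (g t) (b t)) (E b))"
proof
  fix p
  show "(if p \<in> P then \<Prod>t\<in>{1..m}. poly (g t) (p t) else 0)
       = (\<Sum>b\<in>Dl. scaleF (\<Prod>t\<in>{1..m}. coeff (g t) (b t)) (E b)) p"
  proof (cases "p \<in> P")
    case False then show ?thesis by (simp add: sum_fun_apply E_out)
  next
    case True
    let ?F = "\<lambda>b. \<Prod>t\<in>{1..m}. coeff (g t) (b t) * p t ^ b t"
    have "(\<Prod>t\<in>{1..m}. poly (g t) (p t)) = (\<Prod>t\<in>{1..m}. \<Sum>k\<in>{..<s}. coeff (g t) k * p t ^ k)"
      using deg by (intro prod.cong refl poly_sum_s) auto
    also have "\<dots> = (\<Sum>h\<in>PiE {1..m} (\<lambda>_. {..<s}). \<Prod>t\<in>{1..m}. coeff (g t) (h t) * p t ^ h t)"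
      by (rule prod_sum_PiE) auto
    also have "\<dots> = (\<Sum>h\<in>PiE {1..m} (\<lambda>_. {..<s}). ?F (\<lambda>t. if t \<in> {1..m} then h t else 0))"
      by (intro sum.cong refl prod.cong) auto
    also have "\<dots> = (\<Sum>b\<in>Dl. ?F b)"
      by (rule sum.reindex_bij_betw[OF Delta_bij])
    also have "\<dots> = (\<Sum>b\<in>Dl. (\<Prod>t\<in>{1..m}. coeff (g t) (b t)) * E b p)"
      using True by (simp add: E_in prod.distrib)
    finally show ?thesis using True by (simp add: sum_fun_apply)
  qed
qed

lemma dl_span:
  assumes q: "q \<in> P" shows "dl q \<in> fspan (E ` Dl)"
proof -
  define c where "c t = inverse (\<Prod>x\<in>S t - {q t}. (q t - x))" for t
  define g where "g t = smult (c t) (\<Prod>x\<in>S t - {q t}. [:-x, 1:])" for t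
  have fin: "finite (S t)" for t by simp
  have qS: "q t \<in> S t" if "t \<in> {1..m}" for t using q that by (auto simp: points_def)
  have degg: "degree (g t) < s" if t: "t \<in> {1..m}" for t
  proof -
    have "degree (g t) \<le> degree (\<Prod>x\<in>S t - {q t}. [:-x, 1:])" by (simp add: g_def)
    also have "\<dots> \<le> sum (degree \<circ> (\<lambda>x. [:-x, 1:])) (S t - {q t})"
      by (rule degree_prod_sum_le) simp
    also have "\<dots> = card (S t - {q t})" by simp
    also have "\<dots> = s - 1" using cardS t qS[OF t] by (simp add: card_Diff_singleton)
    also have "\<dots> < s" using spos by simp
    finally show ?thesis .
  qed
  have pg: "poly (g t) y = c t * (\<Prod>x\<in>S t - {q t}. (y - x))" for t y
    by (simp add: g_def poly_prod)
  have eq: "(\<lambda>p. if p \<in> P then \<Prod>t\<in>{1..m}. poly (g t) (p t) else 0) = dl q"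
  proof
    fix p
    show "(if p \<in> P then \<Prod>t\<in>{1..m}. poly (g t) (p t) else 0) = dl q p"
    proof (cases "p \<in> P")
      case False
      then have "p \<noteq> q" using q by blast
      then show ?thesis using False by (simp add: dl_def)
    next
      case pP: True
      show ?thesis
      proof (cases "p = q")
        case True
        have "poly (g t) (q t) = 1" for t
        proof -
          have "(\<Prod>x\<in>S t - {q t}. (q t - x)) \<noteq> 0" by (simp add: prod_zero_iff)
          then show ?thesis by (simp add: pg c_def)
        qed
        then have "(\<Prod>t\<in>{1..m}. poly (g t) (p t)) = 1" using True by simp
        then show ?thesis using True pP by (simp add: dl_def)
      next
        case False
        have "\<exists>t\<in>{1..m}. p t \<noteq> q t"
        proof (rule ccontr)
          assume "\<not> ?thesis"
          then have "p = q" using pP q unfolding points_def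
            by (intro PiE_ext[of p "{1..m}" S q]) auto
          then show False using False by simp
        qed
        then obtain t where t: "t \<in> {1..m}" "p t \<noteq> q t" by blast
        have "p t \<in> S t" using pP t by (auto simp: points_def)
        then have "p t \<in> S t - {q t}" using t by simp
        then have "(\<Prod>x\<in>S t - {q t}. (p t - x)) = 0"
          by (subst prod_zero_iff) auto
        then have "poly (g t) (p t) = 0" by (simp add: pg)
        then have "(\<Prod>t\<in>{1..m}. poly (g t) (p t)) = 0" using t
          by (subst prod_zero_iff) auto
        then show ?thesis using False pP by (simp add: dl_def)
      qed
    qed
  qed
  have pf: "(\<lambda>p. if p \<in> P then \<Prod>t\<in>{1..m}. poly (g t) (p t) else 0)
       = (\<Sum>b\<in>Dl. scaleF (\<Prod>t\<in>{1..m}. coeff (g t) (b t)) (E b))"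
    by (rule prod_formula) (use degg in blast)
  show ?thesis unfolding eq[symmetric] pf
    by (intro fv.span_sum fv.span_scale fv.span_base) auto
qed

lemma VP_sum_dl: "f \<in> VP \<Longrightarrow> f = (\<Sum>q\<in>P. scaleF (f q) (dl q))"
proof
  fix x assume f: "f \<in> VP"
  have "(\<Sum>q\<in>P. scaleF (f q) (dl q)) x = (\<Sum>q\<in>P. if x = q then f q else 0)"
    by (simp add: sum_fun_apply dl_def if_distrib cong: if_cong)
  also have "\<dots> = f x" using f finite_P by (simp add: VP_def)
  finally show "f x = (\<Sum>q\<in>P. scaleF (f q) (dl q)) x" by simp
qed

lemma span_E: "fspan (E ` Dl) = VP"
proof
  show "fspan (E ` Dl) \<subseteq> VP" by (rule span_E_VP)
  show "VP \<subseteq> fspan (E ` Dl)"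
  proof
    fix f assume "f \<in> VP"
    then have "f = (\<Sum>q\<in>P. scaleF (f q) (dl q))" by (rule VP_sum_dl)
    also have "\<dots> \<in> fspan (E ` Dl)" by (intro fv.span_sum fv.span_scale dl_span)
    finally show "f \<in> fspan (E ` Dl)" .
  qed
qed

lemma inj_dl: "inj dl"
proof (rule injI)
  fix x y assume "dl x = dl y"
  then have "dl x x = dl y x" by simp
  then show "x = y" by (simp add: dl_def split: if_splits)
qed

lemma indep_dl: assumes "finite A" shows "fv.independent (dl ` A)"
  apply (rule fv.independent_if_scalars_zero)
  subgoal using assms by simp
  subgoal for f x
  proof -
    assume sum0: "(\<Sum>x\<in>dl ` A. scaleF (f x) x) = 0" and x: "x \<in> dl ` A"
    from x obtain q where q: "q \<in> A" "x = dl q" by blast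
    have "0 = (\<Sum>y\<in>dl ` A. scaleF (f y) y) q" using sum0 by simp
    also have "\<dots> = (\<Sum>y\<in>dl ` A. f y * y q)" by (simp add: sum_fun_apply)
    also have "\<dots> = (\<Sum>y\<in>dl ` A. if y = x then f y else 0)"
    proof (intro sum.cong refl)
      fix y assume "y \<in> dl ` A"
      then obtain q' where y: "y = dl q'" by auto
      have "y = x \<longleftrightarrow> q' = q" unfolding y q(2) by (rule inj_eq[OF inj_dl])
      moreover have "y q = (if q' = q then 1 else 0)" unfolding y dl_def by auto
      ultimately show "f y * y q = (if y = x then f y else 0)" by simp
    qed
    also have "\<dots> = f x" using x assms by (simp only: sum.delta finite_imageI if_True)
    finally show "f x = 0" by simp
  qed
  done

lemma VP_span_dl: "VP = fspan (dl ` P)"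
proof
  show "VP \<subseteq> fspan (dl ` P)"
  proof
    fix f assume "f \<in> VP"
    then have "f = (\<Sum>q\<in>P. scaleF (f q) (dl q))" by (rule VP_sum_dl)
    also have "\<dots> \<in> fspan (dl ` P)" by (intro fv.span_sum fv.span_scale fv.span_base) auto
    finally show "f \<in> fspan (dl ` P)" .
  qed
  show "fspan (dl ` P) \<subseteq> VP"
    by (rule fv.span_minimal[OF _ subspace_VP]) (auto simp: VP_def dl_def)
qed

lemma dim_VP: "fdim VP = card P"
proof -
  have "fdim VP = card (dl ` P)"
    unfolding VP_span_dl fv.dim_span by (rule fv.dim_eq_card_independent[OF indep_dl[OF finite_P]])
  also have "\<dots> = card P" using inj_dl by (simp add: card_image inj_on_def inj_def)
  finally show ?thesis .
qed

lemma indep_E_inj: "fv.independent (E ` Dl) \<and> inj_on E Dl"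
proof -
  obtain B where B: "B \<subseteq> E ` Dl" "fv.independent B" "E ` Dl \<subseteq> fspan B"
    using fv.maximal_independent_subset[of "E ` Dl"] by blast
  have "fspan B = fspan (E ` Dl)"
    using B fv.span_mono[OF B(1)] fv.span_minimal[OF B(3) fv.subspace_span] by blast
  then have spB: "fspan B = fspan VP" using span_E fv.span_eq_iff subspace_VP by metis
  have "fdim VP = card B" by (rule fv.dim_eq_card[OF spB B(2)])
  then have cB: "card B = s ^ m" using dim_VP card_P by simp
  have fE: "finite (E ` Dl)" using finite_Delta by simp
  have c1: "card (E ` Dl) \<le> s ^ m" using card_image_le[OF finite_Delta, of E] card_Delta by simp
  have c2: "card B \<le> card (E ` Dl)" using card_mono[OF fE B(1)] .
  have "B = E ` Dl" using card_subset_eq[OF fE B(1)] c1 c2 cB by simp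
  moreover have "inj_on E Dl"
    by (rule eq_card_imp_inj_on[OF finite_Delta]) (use c1 c2 cB card_Delta[of m s] in linarith)
  ultimately show ?thesis using B(2) by simp
qed

lemma indep_E: "fv.independent (E ` Dl)" using indep_E_inj by simp
lemma inj_E: "inj_on E Dl" using indep_E_inj by simp

lemma coeff_unique:
  assumes eq: "(\<Sum>b\<in>Dl. scaleF (x b) (E b)) = (\<Sum>b\<in>Dl. scaleF (y b) (E b))" and b: "b \<in> Dl"
  shows "x b = y b"
proof -
  define u where "u v = x (the_inv_into Dl E v) - y (the_inv_into Dl E v)" for v
  have "(\<Sum>v\<in>E ` Dl. scaleF (u v) v) = (\<Sum>b\<in>Dl. scaleF (u (E b)) (E b))"
    by (rule sum.reindex[OF inj_E, unfolded comp_def])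
  also have "\<dots> = (\<Sum>b\<in>Dl. scaleF (x b) (E b) - scaleF (y b) (E b))"
    by (intro sum.cong refl) (simp add: u_def the_inv_into_f_f[OF inj_E] fun_eq_iff algebra_simps)
  also have "\<dots> = 0" using eq by (simp add: sum_subtractf)
  finally have sum0: "(\<Sum>v\<in>E ` Dl. scaleF (u v) v) = 0" .
  have "\<forall>S\<subseteq>E ` Dl. finite S \<longrightarrow> (\<forall>u. (\<Sum>v\<in>S. scaleF (u v) v) = 0 \<longrightarrow> (\<forall>v\<in>S. u v = 0))"
    using indep_E by (simp only: fv.independent_explicit_finite_subsets)
  then have "\<forall>v\<in>E ` Dl. u v = 0" using sum0 finite_Delta by blast
  then have "u (E b) = 0" using b by blast
  then show ?thesis by (simp add: u_def the_inv_into_f_f[OF inj_E b])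
qed

lemma span_E_coeffs:
  assumes A: "A \<subseteq> Dl" and f: "f \<in> fspan (E ` A)"
  shows "\<exists>x. f = (\<Sum>b\<in>Dl. scaleF (x b) (E b)) \<and> (\<forall>b. b \<notin> A \<longrightarrow> x b = 0)"
proof -
  have fA: "finite A" using A finite_Delta finite_subset by blast
  obtain u where u: "f = (\<Sum>v\<in>E ` A. scaleF (u v) v)"
    using f fv.span_finite[of "E ` A"] fA by auto
  have injA: "inj_on E A" using inj_E A inj_on_subset by blast
  have "f = (\<Sum>b\<in>A. scaleF (u (E b)) (E b))"
    using u by (simp add: sum.reindex[OF injA])
  also have "\<dots> = (\<Sum>b\<in>Dl. scaleF (if b \<in> A then u (E b) else 0) (E b))"
    using A finite_Delta by (intro sum.mono_neutral_cong_left) (auto simp: scaleF_def fun_eq_iff)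
  finally show ?thesis by (intro exI[of _ "\<lambda>b. if b \<in> A then u (E b) else 0"]) auto
qed

end


lemma mult_span:
  fixes X :: "('b \<Rightarrow> 'a::field) set"
  assumes "f \<in> fspan X"
  shows "(\<lambda>p. f p * \<phi> p) \<in> fspan ((\<lambda>g p. g p * \<phi> p) ` X)"
proof -
  have "fsubspace {f. (\<lambda>p. f p * \<phi> p) \<in> fspan ((\<lambda>g p. g p * \<phi> p) ` X)}"
    unfolding fv.subspace_def
  proof (intro conjI allI impI ballI)
    show "0 \<in> {f. (\<lambda>p. f p * \<phi> p) \<in> fspan ((\<lambda>g p. g p * \<phi> p) ` X)}"
      using fv.span_zero by (simp add: zero_fun_def)
  next
    fix x y assume "x \<in> {f. (\<lambda>p. f p * \<phi> p) \<in> fspan ((\<lambda>g p. g p * \<phi> p) ` X)}"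
      "y \<in> {f. (\<lambda>p. f p * \<phi> p) \<in> fspan ((\<lambda>g p. g p * \<phi> p) ` X)}"
    then have "(\<lambda>p. x p * \<phi> p) + (\<lambda>p. y p * \<phi> p) \<in> fspan ((\<lambda>g p. g p * \<phi> p) ` X)"
      by (intro fv.span_add) auto
    moreover have "(\<lambda>p. x p * \<phi> p) + (\<lambda>p. y p * \<phi> p) = (\<lambda>p. (x + y) p * \<phi> p)"
      by (simp add: fun_eq_iff algebra_simps)
    ultimately show "x + y \<in> {f. (\<lambda>p. f p * \<phi> p) \<in> fspan ((\<lambda>g p. g p * \<phi> p) ` X)}" by simp
  next
    fix c x assume "x \<in> {f. (\<lambda>p. f p * \<phi> p) \<in> fspan ((\<lambda>g p. g p * \<phi> p) ` X)}"
    then have "scaleF c (\<lambda>p. x p * \<phi> p) \<in> fspan ((\<lambda>g p. g p * \<phi> p) ` X)"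
      by (intro fv.span_scale) auto
    moreover have "scaleF c (\<lambda>p. x p * \<phi> p) = (\<lambda>p. scaleF c x p * \<phi> p)"
      by (simp add: fun_eq_iff algebra_simps)
    ultimately show "scaleF c x \<in> {f. (\<lambda>p. f p * \<phi> p) \<in> fspan ((\<lambda>g p. g p * \<phi> p) ` X)}" by simp
  qed
  moreover have "\<And>x. x \<in> X \<Longrightarrow> x \<in> {f. (\<lambda>p. f p * \<phi> p) \<in> fspan ((\<lambda>g p. g p * \<phi> p) ` X)}"
    by (auto intro: fv.span_base)
  ultimately show ?thesis using fv.span_induct[OF assms, of "\<lambda>f. (\<lambda>p. f p * \<phi> p) \<in> fspan ((\<lambda>g p. g p * \<phi> p) ` X)"]
    by auto
qed

lemma span_trans_subset:
  fixes X Y :: "('b \<Rightarrow> 'a::field) set"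
  assumes "X \<subseteq> fspan Y" shows "fspan X \<subseteq> fspan Y"
  using fv.span_minimal[OF assms fv.subspace_span] .

context grid begin

definition below :: "(nat \<Rightarrow> nat) \<Rightarrow> (nat \<Rightarrow> nat) set" where
  "below a = {b \<in> Dl. deglex_less m b a}"

definition IS :: "(nat \<Rightarrow> nat) set \<Rightarrow> bool" where
  "IS L \<longleftrightarrow> L \<subseteq> Dl \<and> (\<forall>a\<in>L. \<forall>b\<in>Dl. deglex_less m b a \<longrightarrow> b \<in> L)"

definition Gz :: "((nat \<Rightarrow> 'a) set) \<Rightarrow> (nat \<Rightarrow> nat) \<Rightarrow> bool" where
  "Gz Z a \<longleftrightarrow> a \<in> Dl \<and> (\<exists>h\<in>fspan (E ` below a). \<forall>p\<in>Z. E a p = h p)"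

lemma E_mult: "E (b + d) = (\<lambda>p. E b p * E d p)"
proof
  fix p show "E (b + d) p = E b p * E d p"
    by (cases "p \<in> P") (simp_all add: E_in E_out power_add prod.distrib)
qed

lemma reduction:
  assumes "e \<in> Zm m"
  shows "E e \<in> fspan (E ` {b\<in>Dl. deglex_le m b e})"
  using assms
proof (induction "\<Sum>t=1..m. e t" arbitrary: e rule: less_induct)
  case less
  show ?case
  proof (cases "e \<in> Dl")
    case True then show ?thesis by (intro fv.span_base) (auto simp: deglex_le_def)
  next
    case False
    then obtain t where t: "t \<in> {1..m}" "s \<le> e t"
      using less.prems by (auto simp: Delta_def Zm_def not_less)
    define g where "g = (\<Prod>x\<in>S t. [:-x, 1:])"
    have dg: "degree g = s"
      using cardS t by (simp add: g_def degree_prod_eq_sum_degree)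
    have lg: "coeff g s = 1"
      using lead_coeff_prod[of "\<lambda>x. [:-x, 1:]" "S t"] dg by (simp add: g_def)
    have root: "poly g y = 0" if "y \<in> S t" for y
      using that by (simp add: g_def poly_prod prod_zero_iff)
    have ys: "y ^ s = - (\<Sum>k<s. coeff g k * y ^ k)" if "y \<in> S t" for y
    proof -
      have "0 = poly g y" using root[OF that] by simp
      also have "\<dots> = (\<Sum>k\<le>s. coeff g k * y ^ k)" using dg by (simp add: poly_altdef)
      also have "\<dots> = (\<Sum>k<s. coeff g k * y ^ k) + y ^ s"
        using lg by (simp add: lessThan_Suc_atMost[symmetric])
      finally show ?thesis by (simp add: eq_neg_iff_add_eq_0 add.commute)
    qed
    define ek where "ek k = e(t := e t - s + k)" for k
    have ekZ: "ek k \<in> Zm m" for k using less.prems t by (auto simp: ek_def Zm_def)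
    have sum_ek: "(\<Sum>u=1..m. ek k u) = (\<Sum>u=1..m. e u) - s + k" if "k < s" for k
    proof -
      have "(\<Sum>u=1..m. ek k u) = ek k t + (\<Sum>u\<in>{1..m}-{t}. ek k u)"
        using t by (simp add: sum.remove)
      also have "(\<Sum>u\<in>{1..m}-{t}. ek k u) = (\<Sum>u\<in>{1..m}-{t}. e u)"
        by (intro sum.cong) (auto simp: ek_def)
      also have "(\<Sum>u=1..m. e u) = e t + (\<Sum>u\<in>{1..m}-{t}. e u)"
        using t by (simp add: sum.remove)
      ultimately show ?thesis using t by (simp add: ek_def)
    qed
    have sum_lt: "(\<Sum>u=1..m. ek k u) < (\<Sum>u=1..m. e u)" if "k < s" for k
    proof -
      have "e t \<le> (\<Sum>u=1..m. e u)" using t by (intro member_le_sum) auto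
      then show ?thesis using sum_ek[OF that] that t by linarith
    qed
    have ek_lt: "deglex_less m (ek k) e" if "k < s" for k
      by (rule lt_deg[OF sum_lt[OF that]])
    have eq: "E e = (\<Sum>k<s. scaleF (- coeff g k) (E (ek k)))"
    proof
      fix p
      show "E e p = (\<Sum>k<s. scaleF (- coeff g k) (E (ek k))) p"
      proof (cases "p \<in> P")
        case False then show ?thesis by (simp add: sum_fun_apply E_out)
      next
        case True
        then have pt: "p t \<in> S t" using t by (auto simp: points_def)
        define R where "R = (\<Prod>u\<in>{1..m}-{t}. p u ^ e u)"
        have R: "(\<Prod>u\<in>{1..m}-{t}. p u ^ ek k u) = R" for k
          by (auto simp: R_def ek_def intro!: prod.cong)
        have "E e p = p t ^ e t * R" using True t by (simp add: E_in R_def prod.remove)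
        also have "p t ^ e t = p t ^ (e t - s) * p t ^ s"
          using t by (simp add: power_add[symmetric])
        also have "\<dots> = - (\<Sum>k<s. coeff g k * p t ^ (e t - s + k))"
          using ys[OF pt] by (simp add: sum_distrib_left power_add algebra_simps sum_negf)
        also have "- (\<Sum>k<s. coeff g k * p t ^ (e t - s + k)) * R
            = (\<Sum>k<s. - coeff g k * (p t ^ ek k t * R))"
          by (simp add: sum_distrib_right sum_negf ek_def algebra_simps sum_distrib_left)
        also have "\<dots> = (\<Sum>k<s. - coeff g k * E (ek k) p)"
        proof (intro sum.cong refl)
          fix k
          have "E (ek k) p = p t ^ ek k t * (\<Prod>u\<in>{1..m}-{t}. p u ^ ek k u)"
            using True t by (simp add: E_in prod.remove)
          then show "- coeff g k * (p t ^ ek k t * R) = - coeff g k * E (ek k) p"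
            using R[of k] by simp
        qed
        finally show ?thesis by (simp add: sum_fun_apply)
      qed
    qed
    have "E (ek k) \<in> fspan (E ` {b\<in>Dl. deglex_le m b e})" if k: "k < s" for k
    proof -
      have "E (ek k) \<in> fspan (E ` {b\<in>Dl. deglex_le m b (ek k)})"
        by (rule less.hyps[OF sum_lt[OF k] ekZ])
      moreover have "fspan (E ` {b\<in>Dl. deglex_le m b (ek k)}) \<subseteq> fspan (E ` {b\<in>Dl. deglex_le m b e})"
        using ek_lt[OF k] by (intro fv.span_mono image_mono) (auto simp: deglex_le_def intro: le_trans_lt)
      ultimately show ?thesis by blast
    qed
    then show ?thesis unfolding eq by (intro fv.span_sum fv.span_scale) auto
  qed
qed

lemma Gz_up:
  assumes G: "Gz Z a" and c: "c \<in> Dl" and dv: "mdvd a c"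
  shows "Gz Z c"
proof -
  obtain h where h: "h \<in> fspan (E ` below a)" "\<forall>p\<in>Z. E a p = h p"
    using G by (auto simp: Gz_def)
  have aD: "a \<in> Dl" using G by (simp add: Gz_def)
  define d where "d = (\<lambda>t. c t - a t)"
  have cad: "c = a + d" using dv by (auto simp: d_def mdvd_def fun_eq_iff)
  have dZ: "d \<in> Zm m" using c aD by (auto simp: d_def Zm_def Delta_def)
  have "(\<lambda>p. h p * E d p) \<in> fspan ((\<lambda>g p. g p * E d p) ` (E ` below a))"
    by (rule mult_span[OF h(1)])
  also have "fspan ((\<lambda>g p. g p * E d p) ` (E ` below a)) \<subseteq> fspan (E ` below c)"
  proof (rule span_trans_subset, rule subsetI)
    fix x assume "x \<in> (\<lambda>g p. g p * E d p) ` (E ` below a)"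
    then obtain b where b: "b \<in> below a" "x = (\<lambda>p. E b p * E d p)" by auto
    have x: "x = E (b + d)" using b by (simp add: E_mult)
    have "b \<in> Zm m" using b Delta_Zm[of m s] by (auto simp: below_def)
    then have bd: "b + d \<in> Zm m" using dZ by (simp add: Zm_def)
    have lt: "deglex_less m (b + d) c" using b cad lt_add by (auto simp: below_def)
    have "E (b + d) \<in> fspan (E ` {b'\<in>Dl. deglex_le m b' (b + d)})" by (rule reduction[OF bd])
    also have "\<dots> \<subseteq> fspan (E ` below c)"
      using lt by (intro fv.span_mono image_mono) (auto simp: below_def intro: le_trans_lt)
    finally show "x \<in> fspan (E ` below c)" using x by simp
  qed
  finally have hd: "(\<lambda>p. h p * E d p) \<in> fspan (E ` below c)" .
  have "\<forall>p\<in>Z. E c p = h p * E d p" using h(2) by (simp add: cad E_mult)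
  then show ?thesis using hd c by (auto simp: Gz_def)
qed

lemma exists_max:
  assumes "finite L" "L \<noteq> {}" "L \<subseteq> Zm m"
  shows "\<exists>a\<in>L. \<forall>b\<in>L. b \<noteq> a \<longrightarrow> deglex_less m b a"
  using assms
proof (induction L rule: finite_ne_induct)
  case (singleton x) then show ?case by auto
next
  case (insert x F)
  then obtain a where a: "a \<in> F" "\<forall>b\<in>F. b \<noteq> a \<longrightarrow> deglex_less m b a" by auto
  have xa: "x \<noteq> a" using insert a by auto
  have "x \<in> Zm m" "a \<in> Zm m" using insert a by auto
  then consider "deglex_less m x a" | "deglex_less m a x" using lt_total xa by blast
  then show ?case
  proof cases
    case 1 then show ?thesis using a by auto
  next
    case 2 then show ?thesis using a by (auto intro: lt_trans)
  qed
qed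

lemma IS_induct:
  assumes ISa: "IS La" and ISL: "IS L" and sub: "La \<subseteq> L" and base: "Q La"
    and step: "\<And>L a. IS L \<Longrightarrow> La \<subseteq> L \<Longrightarrow> a \<in> Dl \<Longrightarrow> a \<notin> L \<Longrightarrow> L = below a
      \<Longrightarrow> IS (insert a L) \<Longrightarrow> Q L \<Longrightarrow> Q (insert a L)"
  shows "Q L"
  using ISL sub
proof (induction "card (L - La)" arbitrary: L rule: less_induct)
  case less
  have "L \<subseteq> Dl" using less.prems by (simp add: IS_def)
  then have fL: "finite L" using finite_subset finite_Delta by blast
  show ?case
  proof (cases "L = La")
    case True then show ?thesis using base by simp
  next
    case False
    then have ne: "L \<noteq> {}" using less.prems by auto
    have LZ: "L \<subseteq> Zm m" using \<open>L \<subseteq> Dl\<close> Delta_Zm[of m s] by blast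
    obtain a where a: "a \<in> L" "\<forall>b\<in>L. b \<noteq> a \<longrightarrow> deglex_less m b a"
      using exists_max[OF fL ne LZ] by blast
    have aD: "a \<in> Dl" using a less.prems by (auto simp: IS_def)
    have aLa: "a \<notin> La"
    proof
      assume aLa: "a \<in> La"
      have "L \<subseteq> La"
      proof
        fix b assume bL: "b \<in> L"
        show "b \<in> La"
        proof (cases "b = a")
          case True then show ?thesis using aLa by simp
        next
          case False
          then have "deglex_less m b a" using a bL by blast
          moreover have "b \<in> Dl" using bL \<open>L \<subseteq> Dl\<close> by blast
          ultimately show ?thesis using ISa aLa unfolding IS_def by blast
        qed
      qed
      then show False using False less.prems by blast
    qed
    define L' where "L' = L - {a}"
    have ISL: "L \<subseteq> Dl" "\<forall>c\<in>L. \<forall>b\<in>Dl. deglex_less m b c \<longrightarrow> b \<in> L"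
      using less.prems by (auto simp: IS_def)
    have L'b: "L' = below a"
    proof
      show "L' \<subseteq> below a"
      proof
        fix c assume "c \<in> L'"
        then have "c \<in> L" "c \<noteq> a" by (auto simp: L'_def)
        then show "c \<in> below a" using a ISL by (auto simp: below_def)
      qed
      show "below a \<subseteq> L'"
      proof
        fix c assume "c \<in> below a"
        then have "c \<in> Dl" "deglex_less m c a" by (auto simp: below_def)
        then have "c \<in> L" "c \<noteq> a" using ISL a lt_irrefl by blast+
        then show "c \<in> L'" by (simp add: L'_def)
      qed
    qed
    have IS': "IS L'"
      unfolding IS_def
    proof (intro conjI ballI impI)
      show "L' \<subseteq> Dl" using ISL by (auto simp: L'_def)
      fix c b assume c: "c \<in> L'" and b: "b \<in> Dl" and bc: "deglex_less m b c"
      have cL: "c \<in> L" "c \<noteq> a" using c by (auto simp: L'_def)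
      have "b \<in> L" using ISL cL b bc by blast
      moreover have "b \<noteq> a"
      proof
        assume "b = a"
        then have "deglex_less m a c" using bc by simp
        moreover have "deglex_less m c a" using a cL by blast
        ultimately show False using lt_trans lt_irrefl by blast
      qed
      ultimately show "b \<in> L'" by (simp add: L'_def)
    qed
    have sub': "La \<subseteq> L'" using less.prems aLa by (auto simp: L'_def)
    have "card (L' - La) < card (L - La)"
      using fL a aLa by (intro psubset_card_mono) (auto simp: L'_def)
    then have QL': "Q L'" by (rule less.hyps[OF _ IS' sub'])
    have Leq: "insert a L' = L" using a by (auto simp: L'_def)
    have aL': "a \<notin> L'" by (simp add: L'_def)
    have ISi: "IS (insert a L')" using Leq less.prems by simp
    have "Q (insert a L')" by (rule step[OF IS' sub' aD aL' L'b ISi QL'])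
    then show ?thesis using Leq by simp
  qed
qed

end


lemma fdim_zero: "fdim {0::'b \<Rightarrow> 'a::field} = 0"
proof -
  have "fdim {0::'b \<Rightarrow> 'a} = fdim (fspan ({}::('b \<Rightarrow> 'a) set))" by simp
  also have "\<dots> = fdim ({}::('b \<Rightarrow> 'a) set)" by (rule fv.dim_span)
  also have "\<dots> = 0" using fv.dim_eq_card_independent[OF fv.independent_empty] by simp
  finally show ?thesis .
qed

lemma fdim_le_zero:
  fixes X :: "('b \<Rightarrow> 'a::field) set"
  assumes "X \<subseteq> {0}" shows "fdim X = 0"
proof -
  have "X \<subseteq> fspan {}" using assms by simp
  then have "fdim X \<le> card ({}::('b \<Rightarrow> 'a) set)" by (rule fv.dim_le_card) simp
  then show ?thesis by simp
qed

context grid begin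

definition ip :: "((nat \<Rightarrow> 'a) \<Rightarrow> 'a) \<Rightarrow> ((nat \<Rightarrow> 'a) \<Rightarrow> 'a) \<Rightarrow> 'a" where
  "ip u c = (\<Sum>p\<in>P. c p * u p)"

lemma ip_diff: "ip u (x - y) = ip u x - ip u y"
  by (simp add: ip_def algebra_simps sum_subtractf)
lemma ip_add: "ip u (x + y) = ip u x + ip u y"
  by (simp add: ip_def algebra_simps sum.distrib)
lemma ip_scale: "ip u (scaleF k x) = k * ip u x"
  by (simp add: ip_def algebra_simps sum_distrib_left)
lemma ip_diff1: "ip (u - w) x = ip u x - ip w x"
  by (simp add: ip_def algebra_simps sum_subtractf)
lemma ip_scale1: "ip (scaleF k u) x = k * ip u x"
  by (simp add: ip_def algebra_simps sum_distrib_left)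

lemma ip_span_zero:
  assumes "\<forall>c\<in>X. ip u c = 0" "c \<in> fspan X" shows "ip u c = 0"
proof -
  have "fsubspace {c. ip u c = 0}"
    by (auto simp: fv.subspace_def ip_add ip_scale) (simp add: ip_def)
  then have "fspan X \<subseteq> {c. ip u c = 0}" using assms(1) by (intro fv.span_minimal) auto
  then show ?thesis using assms(2) by blast
qed

lemma span_E_insert: "fspan (E ` insert a L) = fspan (insert (E a) (E ` L))" by simp

lemma VP_fin: "VP \<subseteq> fspan (dl ` P)" using VP_span_dl by simp

lemma gen_dual:
  assumes J: "J \<subseteq> P" and U: "fsubspace U" "\<forall>u\<in>U. \<forall>p. p \<notin> J \<longrightarrow> u p = 0"
    and ISa: "IS La" and ISb: "IS Lb" and sub: "La \<subseteq> Lb"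
    and perpa: "\<forall>u\<in>U. \<forall>c\<in>fspan (E ` La). ip u c = 0"
    and trivb: "\<forall>u\<in>U. (\<forall>c\<in>fspan (E ` Lb). ip u c = 0) \<longrightarrow> u = 0"
  shows "fdim U \<le> card ((Lb - La) \<inter> {a. \<not> Gz J a})"
proof -
  define UL where "UL L = {u\<in>U. \<forall>c\<in>fspan (E ` L). ip u c = 0}" for L
  have ULfin: "UL L \<subseteq> fspan (dl ` P)" for L
  proof -
    have "UL L \<subseteq> VP" using U J by (auto simp: UL_def VP_def)
    then show ?thesis using VP_fin by blast
  qed
  have "fdim U \<le> fdim (UL L) + card ((L - La) \<inter> {a. \<not> Gz J a})" if "IS L" "La \<subseteq> L" for L
    using ISa that(1,2)
  proof (rule IS_induct[where Q = "\<lambda>L. fdim U \<le> fdim (UL L) + card ((L - La) \<inter> {a. \<not> Gz J a})"])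
    have "UL La = U" using perpa by (auto simp: UL_def)
    then show "fdim U \<le> fdim (UL La) + card ((La - La) \<inter> {a. \<not> Gz J a})" by simp
  next
    fix L a assume 2: "IS L" "La \<subseteq> L" "a \<in> Dl" "a \<notin> L" "L = below a" "IS (insert a L)"
      "fdim U \<le> fdim (UL L) + card ((L - La) \<inter> {a. \<not> Gz J a})"
    have aLa: "a \<notin> La" using 2(2,4) by blast
    have "L \<subseteq> Dl" using 2(1) by (simp add: IS_def)
    then have fL: "finite L" using finite_Delta finite_subset by blast
    have UL': "UL (insert a L) = {u \<in> UL L. ip u (E a) = 0}"
    proof
      show "UL (insert a L) \<subseteq> {u \<in> UL L. ip u (E a) = 0}"
        unfolding UL_def using fv.span_mono[of "E ` L" "E ` insert a L"] fv.span_base[of "E a" "E ` insert a L"]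
        by blast
      show "{u \<in> UL L. ip u (E a) = 0} \<subseteq> UL (insert a L)"
      proof
        fix u assume u: "u \<in> {u \<in> UL L. ip u (E a) = 0}"
        have "ip u c = 0" if c: "c \<in> fspan (E ` insert a L)" for c
        proof -
          obtain k where k: "c - scaleF k (E a) \<in> fspan (E ` L)"
            using c[unfolded image_insert fv.span_breakdown_eq] by blast
          have "ip u (c - scaleF k (E a)) = 0" using u k by (auto simp: UL_def)
          then show ?thesis using u by (simp add: ip_diff ip_scale)
        qed
        then show "u \<in> UL (insert a L)" using u by (auto simp: UL_def)
      qed
    qed
    show "fdim U \<le> fdim (UL (insert a L)) + card ((insert a L - La) \<inter> {a. \<not> Gz J a})"
    proof (cases "Gz J a")
      case True
      then obtain h where h: "h \<in> fspan (E ` below a)" "\<forall>p\<in>J. E a p = h p" by (auto simp: Gz_def)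
      have "ip u (E a) = 0" if u: "u \<in> UL L" for u
      proof -
        have uU: "u \<in> U" using u by (simp add: UL_def)
        have "ip u (E a) = ip u h"
          unfolding ip_def
        proof (intro sum.cong refl)
          fix p assume "p \<in> P"
          show "E a p * u p = h p * u p"
          proof (cases "p \<in> J")
            case True then show ?thesis using h(2) by simp
          next
            case False then show ?thesis using U(2) uU by simp
          qed
        qed
        also have "\<dots> = 0" using u h(1) 2 by (auto simp: UL_def)
        finally show ?thesis .
      qed
      then have "UL (insert a L) = UL L" using UL' by auto
      moreover have "(insert a L - La) \<inter> {a. \<not> Gz J a} = (L - La) \<inter> {a. \<not> Gz J a}"
        using True by auto
      ultimately show ?thesis using 2 by simp
    next
      case False
      have "fdim (UL L) \<le> fdim (UL (insert a L)) + 1"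
      proof (cases "\<exists>w0\<in>UL L. ip w0 (E a) \<noteq> 0")
        case False
        then have "UL L = UL (insert a L)" using UL' by auto
        then show ?thesis by simp
      next
        case True
        then obtain w0 where w0: "w0 \<in> UL L" "ip w0 (E a) \<noteq> 0" by blast
        have "UL L \<subseteq> fspan (insert w0 (UL (insert a L)))"
        proof
          fix u assume u: "u \<in> UL L"
          define k where "k = ip u (E a) / ip w0 (E a)"
          have "u - scaleF k w0 \<in> UL L"
            using u w0 U(1) unfolding UL_def
            by (auto simp: ip_diff1 ip_scale1 intro!: fv.subspace_diff fv.subspace_scale)
          moreover have "ip (u - scaleF k w0) (E a) = 0"
            using w0 by (simp add: ip_diff1 ip_scale1 k_def)
          ultimately have "u - scaleF k w0 \<in> UL (insert a L)" using UL' by auto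
          then show "u \<in> fspan (insert w0 (UL (insert a L)))"
            using fv.span_breakdown_eq fv.span_base by blast
        qed
        then show ?thesis by (rule fdim_le_insert[OF _ ULfin finite_imageI[OF finite_P]])
      qed
      moreover have "card ((insert a L - La) \<inter> {a. \<not> Gz J a}) = card ((L - La) \<inter> {a. \<not> Gz J a}) + 1"
      proof -
        have "(insert a L - La) \<inter> {a. \<not> Gz J a} = insert a ((L - La) \<inter> {a. \<not> Gz J a})"
          using False aLa by auto
        then show ?thesis using fL 2 by simp
      qed
      ultimately show ?thesis using 2 by simp
    qed
  qed
  from this[OF ISb sub] have "fdim U \<le> fdim (UL Lb) + card ((Lb - La) \<inter> {a. \<not> Gz J a})" .
  moreover have "fdim (UL Lb) = 0" using trivb by (intro fdim_le_zero) (auto simp: UL_def)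
  ultimately show ?thesis by simp
qed

lemma gen_primal:
  assumes U: "fsubspace U" "U \<subseteq> fspan (E ` Lb)" "U \<inter> fspan (E ` La) = {0}"
    and Z: "\<forall>u\<in>U. \<forall>p\<in>Z. u p = 0"
    and ISa: "IS La" and ISb: "IS Lb" and sub: "La \<subseteq> Lb"
  shows "fdim U \<le> card ((Lb - La) \<inter> {a. Gz Z a})"
proof -
  have Ufin: "U \<inter> fspan (E ` L) \<subseteq> fspan (dl ` P)" for L
  proof -
    have "U \<subseteq> VP" using U(2) span_E_VP by blast
    then show ?thesis using VP_fin by blast
  qed
  have "fdim (U \<inter> fspan (E ` L)) \<le> card ((L - La) \<inter> {a. Gz Z a})" if "IS L" "La \<subseteq> L" for L
    using ISa that(1,2)
  proof (rule IS_induct[where Q = "\<lambda>L. fdim (U \<inter> fspan (E ` L)) \<le> card ((L - La) \<inter> {a. Gz Z a})"])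
    show "fdim (U \<inter> fspan (E ` La)) \<le> card ((La - La) \<inter> {a. Gz Z a})"
      using U(3) fdim_le_zero[of "U \<inter> fspan (E ` La)"] by simp
  next
    fix L a assume 2: "IS L" "La \<subseteq> L" "a \<in> Dl" "a \<notin> L" "L = below a" "IS (insert a L)"
      "fdim (U \<inter> fspan (E ` L)) \<le> card ((L - La) \<inter> {a. Gz Z a})"
    have aLa: "a \<notin> La" using 2(2,4) by blast
    have "L \<subseteq> Dl" using 2(1) by (simp add: IS_def)
    then have fL: "finite L" using finite_Delta finite_subset by blast
    define X where "X = U \<inter> fspan (E ` insert a L)"
    define Y where "Y = U \<inter> fspan (E ` L)"
    have Xdec: "\<exists>k. x - scaleF k (E a) \<in> fspan (E ` L)" if "x \<in> X" for x
    proof -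
      have "x \<in> fspan (insert (E a) (E ` L))" using that by (simp add: X_def)
      then show ?thesis unfolding fv.span_breakdown_eq .
    qed
    have YX: "Y \<subseteq> fspan Y" using fv.span_superset by blast
    have YF: "Y \<subseteq> fspan (dl ` P)" using Ufin[of L] by (simp add: Y_def)
    show "fdim (U \<inter> fspan (E ` insert a L)) \<le> card ((insert a L - La) \<inter> {a. Gz Z a})"
    proof (cases "Gz Z a")
      case False
      have "X \<subseteq> Y"
      proof
        fix x assume x: "x \<in> X"
        then obtain k where k: "x - scaleF k (E a) \<in> fspan (E ` L)" using Xdec by blast
        have "k = 0"
        proof (rule ccontr)
          assume k0: "k \<noteq> 0"
          define h where "h = scaleF (- inverse k) (x - scaleF k (E a))"
          have "h \<in> fspan (E ` below a)" unfolding h_def using k 2(5) by (intro fv.span_scale) simp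
          moreover have "\<forall>p\<in>Z. E a p = h p"
            using Z x k0 by (auto simp: h_def X_def field_simps)
          ultimately show False using False 2(3) by (auto simp: Gz_def)
        qed
        then show "x \<in> Y" using x k by (simp add: X_def Y_def)
      qed
      then have "fdim X \<le> fdim Y"
        using YX by (intro fdim_le_span[OF _ YF finite_imageI[OF finite_P]]) auto
      moreover have "(insert a L - La) \<inter> {a. Gz Z a} = (L - La) \<inter> {a. Gz Z a}" using False by auto
      ultimately show ?thesis using 2(7) by (simp add: X_def Y_def)
    next
      case True
      have "fdim X \<le> fdim Y + 1"
      proof (cases "X \<subseteq> fspan (E ` L)")
        case True
        then have "X \<subseteq> Y" by (auto simp: X_def Y_def)
        then have "fdim X \<le> fdim Y"
          using YX by (intro fdim_le_span[OF _ YF finite_imageI[OF finite_P]]) auto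
        then show ?thesis by simp
      next
        case False
        then obtain x0 where x0: "x0 \<in> X" "x0 \<notin> fspan (E ` L)" by blast
        obtain k0 where k0: "x0 - scaleF k0 (E a) \<in> fspan (E ` L)" using Xdec[OF x0(1)] by blast
        have k0nz: "k0 \<noteq> 0" using k0 x0(2) by auto
        have "X \<subseteq> fspan (insert x0 Y)"
        proof
          fix x assume x: "x \<in> X"
          then obtain k where k: "x - scaleF k (E a) \<in> fspan (E ` L)" using Xdec by blast
          define y where "y = x - scaleF (k / k0) x0"
          have "y = (x - scaleF k (E a)) - scaleF (k / k0) (x0 - scaleF k0 (E a))"
            using k0nz by (simp add: y_def fun_eq_iff algebra_simps)
          then have y1: "y \<in> fspan (E ` L)" using k k0 by (simp add: fv.span_diff fv.span_scale)
          have "y \<in> U" using x x0 U(1) by (simp add: y_def X_def fv.subspace_diff fv.subspace_scale)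
          then have "y \<in> Y" using y1 by (simp add: Y_def)
          then show "x \<in> fspan (insert x0 Y)"
            unfolding fv.span_breakdown_eq y_def using fv.span_base by blast
        qed
        then show ?thesis
          by (rule fdim_le_insert[OF _ YF finite_imageI[OF finite_P]])
      qed
      moreover have "card ((insert a L - La) \<inter> {a. Gz Z a}) = card ((L - La) \<inter> {a. Gz Z a}) + 1"
      proof -
        have "(insert a L - La) \<inter> {a. Gz Z a} = insert a ((L - La) \<inter> {a. Gz Z a})"
          using True aLa by auto
        then show ?thesis using fL 2(4) by simp
      qed
      ultimately show ?thesis using 2(7) by (simp add: X_def Y_def)
    qed
  qed
  from this[OF ISb sub] have "fdim (U \<inter> fspan (E ` Lb)) \<le> card ((Lb - La) \<inter> {a. Gz Z a})" .
  moreover have "U \<inter> fspan (E ` Lb) = U" using U(2) by blast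
  ultimately show ?thesis by simp
qed

lemma IS_empty: "IS {}" by (simp add: IS_def)
lemma IS_Dl: "IS Dl" by (simp add: IS_def)

lemma count_nonG:
  assumes J: "J \<subseteq> P" shows "card J \<le> card (Dl \<inter> {a. \<not> Gz J a})"
proof -
  define U where "U = {f. \<forall>p. p \<notin> J \<longrightarrow> f p = (0::'a)}"
  have fJ: "finite J" using J finite_P finite_subset by blast
  have subU: "fsubspace U" by (auto simp: U_def fv.subspace_def)
  have UJ: "U = fspan (dl ` J)"
  proof
    show "U \<subseteq> fspan (dl ` J)"
    proof
      fix f assume f: "f \<in> U"
      have "f = (\<Sum>q\<in>J. scaleF (f q) (dl q))"
      proof
        fix x
        have "(\<Sum>q\<in>J. scaleF (f q) (dl q)) x = (\<Sum>q\<in>J. if x = q then f q else 0)"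
          by (simp add: sum_fun_apply dl_def if_distrib cong: if_cong)
        also have "\<dots> = f x" using f fJ by (simp add: U_def)
        finally show "f x = (\<Sum>q\<in>J. scaleF (f q) (dl q)) x" by simp
      qed
      also have "\<dots> \<in> fspan (dl ` J)" by (intro fv.span_sum fv.span_scale fv.span_base) auto
      finally show "f \<in> fspan (dl ` J)" .
    qed
    show "fspan (dl ` J) \<subseteq> U"
      by (rule fv.span_minimal[OF _ subU]) (auto simp: U_def dl_def)
  qed
  have dimU: "fdim U = card J"
  proof -
    have "fdim U = card (dl ` J)"
      unfolding UJ fv.dim_span by (rule fv.dim_eq_card_independent[OF indep_dl[OF fJ]])
    also have "\<dots> = card J" using inj_dl by (simp add: card_image inj_on_def inj_def)
    finally show ?thesis .
  qed
  have triv: "\<forall>u\<in>U. (\<forall>c\<in>fspan (E ` Dl). ip u c = 0) \<longrightarrow> u = 0"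
  proof (intro ballI impI)
    fix u assume u: "u \<in> U" and perp: "\<forall>c\<in>fspan (E ` Dl). ip u c = 0"
    show "u = 0"
    proof
      fix q
      show "u q = 0 q"
      proof (cases "q \<in> J")
        case False then show ?thesis using u by (simp add: U_def)
      next
        case True
        then have qP: "q \<in> P" using J by blast
        have "ip u (dl q) = 0" using perp dl_span[OF qP] by blast
        moreover have "ip u (dl q) = u q"
        proof -
          have "ip u (dl q) = (\<Sum>p\<in>P. if p = q then u p else 0)"
            unfolding ip_def by (intro sum.cong) (auto simp: dl_def)
          also have "\<dots> = u q" using qP finite_P by simp
          finally show ?thesis .
        qed
        ultimately show ?thesis by simp
      qed
    qed
  qed
  have "fdim U \<le> card ((Dl - {}) \<inter> {a. \<not> Gz J a})"
    by (rule gen_dual[OF J subU _ IS_empty IS_Dl]) (auto simp: U_def triv ip_def)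
  then show ?thesis using dimU by simp
qed

lemma count_G:
  assumes J: "J \<subseteq> P" shows "card P - card J \<le> card (Dl \<inter> {a. Gz J a})"
proof -
  define U where "U = {f. \<forall>p. (p \<notin> P \<or> p \<in> J) \<longrightarrow> f p = (0::'a)}"
  have fJ: "finite (P - J)" using finite_P by blast
  have subU: "fsubspace U" by (auto simp: U_def fv.subspace_def)
  have UJ: "U = fspan (dl ` (P - J))"
  proof
    show "U \<subseteq> fspan (dl ` (P - J))"
    proof
      fix f assume f: "f \<in> U"
      have "f = (\<Sum>q\<in>P - J. scaleF (f q) (dl q))"
      proof
        fix x
        have "(\<Sum>q\<in>P - J. scaleF (f q) (dl q)) x = (\<Sum>q\<in>P - J. if x = q then f q else 0)"
          by (simp add: sum_fun_apply dl_def if_distrib cong: if_cong)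
        also have "\<dots> = f x" using f fJ by (auto simp: U_def)
        finally show "f x = (\<Sum>q\<in>P - J. scaleF (f q) (dl q)) x" by simp
      qed
      also have "\<dots> \<in> fspan (dl ` (P - J))" by (intro fv.span_sum fv.span_scale fv.span_base) auto
      finally show "f \<in> fspan (dl ` (P - J))" .
    qed
    show "fspan (dl ` (P - J)) \<subseteq> U"
      by (rule fv.span_minimal[OF _ subU]) (auto simp: U_def dl_def)
  qed
  have dimU: "fdim U = card P - card J"
  proof -
    have "fdim U = card (dl ` (P - J))"
      unfolding UJ fv.dim_span by (rule fv.dim_eq_card_independent[OF indep_dl[OF fJ]])
    also have "\<dots> = card (P - J)" using inj_dl by (simp add: card_image inj_on_def inj_def)
    also have "\<dots> = card P - card J" using J finite_P by (simp add: card_Diff_subset finite_subset)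
    finally show ?thesis .
  qed
  have "U \<subseteq> VP" by (auto simp: U_def VP_def)
  then have U2: "U \<subseteq> fspan (E ` Dl)" using span_E by simp
  have "fdim U \<le> card ((Dl - {}) \<inter> {a. Gz J a})"
    by (rule gen_primal[OF subU U2 _ _ IS_empty IS_Dl]) (auto simp: U_def)
  then show ?thesis using dimU by simp
qed

end


locale grid_enum = grid +
  fixes x :: "nat \<Rightarrow> nat \<Rightarrow> 'a"
  assumes xbij: "\<forall>t\<in>{1..m}. bij_betw (x t) {..<s} (S t)"
begin

definition ga :: "(nat \<Rightarrow> nat) \<Rightarrow> nat \<Rightarrow> 'a poly" where
  "ga a t = (\<Prod>j<a t. [:- x t j, 1:])"
definition ca :: "(nat \<Rightarrow> nat) \<Rightarrow> (nat \<Rightarrow> nat) \<Rightarrow> 'a" where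
  "ca a b = (\<Prod>t\<in>{1..m}. coeff (ga a t) (b t))"
definition Fa :: "(nat \<Rightarrow> nat) \<Rightarrow> ((nat \<Rightarrow> 'a) \<Rightarrow> 'a)" where
  "Fa a = (\<lambda>p. if p \<in> P then \<Prod>t\<in>{1..m}. \<Prod>j<a t. (p t - x t j) else 0)"

lemma deg_ga: "degree (ga a t) = a t"
proof -
  have "degree (ga a t) = (\<Sum>j<a t. degree [:- x t j, 1:])"
    unfolding ga_def by (rule degree_prod_eq_sum_degree) auto
  then show ?thesis by simp
qed

lemma lc_ga: "coeff (ga a t) (a t) = 1"
  using lead_coeff_prod[of "\<lambda>j. [:- x t j, 1:]" "{..<a t}"] deg_ga[of a t] by (simp add: ga_def)

lemma Fa_expand:
  assumes a: "a \<in> Dl" shows "Fa a = (\<Sum>b\<in>Dl. scaleF (ca a b) (E b))"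
proof -
  have "\<forall>t\<in>{1..m}. degree (ga a t) < s" using a by (auto simp: deg_ga Delta_def)
  from prod_formula[OF this] have pf: "(\<lambda>p. if p \<in> P then \<Prod>t\<in>{1..m}. poly (ga a t) (p t) else 0)
       = (\<Sum>b\<in>Dl. scaleF (\<Prod>t\<in>{1..m}. coeff (ga a t) (b t)) (E b))" .
  have pg: "poly (ga a t) y = (\<Prod>j<a t. (y - x t j))" for t y by (simp add: ga_def poly_prod)
  show ?thesis using pf unfolding pg by (simp add: Fa_def ca_def)
qed

lemma ca_self: "ca a a = 1" by (simp add: ca_def lc_ga)

lemma ca_nz:
  assumes "ca a b \<noteq> 0" "t \<in> {1..m}" shows "b t \<le> a t"
proof (rule ccontr)
  assume "\<not> b t \<le> a t"
  then have "coeff (ga a t) (b t) = 0" by (intro coeff_eq_0) (simp add: deg_ga)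
  then have "ca a b = 0" using assms(2) unfolding ca_def by (intro prod_zero) auto
  then show False using assms(1) by simp
qed

lemma ca_nz_le:
  assumes "ca a b \<noteq> 0" "a \<in> Dl" "b \<in> Dl" shows "deglex_le m b a"
proof (cases "b = a")
  case True then show ?thesis by (simp add: deglex_le_def)
next
  case False
  have "mdvd b a"
  proof -
    have "b t \<le> a t" for t
    proof (cases "t \<in> {1..m}")
      case True then show ?thesis using ca_nz[OF assms(1)] by blast
    next
      case False then show ?thesis using assms(3) by (simp add: Delta_def)
    qed
    then show ?thesis by (simp add: mdvd_def)
  qed
  then show ?thesis using mdvd_lt[of a m b] assms(2,3) Delta_Zm False by (auto simp: deglex_le_def)
qed

lemma sum_Fa_expand:
  assumes K: "K \<subseteq> Dl"
  shows "(\<Sum>a\<in>K. scaleF (lam a) (Fa a)) = (\<Sum>b\<in>Dl. scaleF (\<Sum>a\<in>K. lam a * ca a b) (E b))"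
proof
  fix p
  have "(\<Sum>a\<in>K. scaleF (lam a) (Fa a)) p = (\<Sum>a\<in>K. lam a * (\<Sum>b\<in>Dl. ca a b * E b p))"
    using K by (auto simp: sum_fun_apply Fa_expand intro!: sum.cong)
  also have "\<dots> = (\<Sum>a\<in>K. \<Sum>b\<in>Dl. lam a * ca a b * E b p)"
    by (simp add: sum_distrib_left mult.assoc)
  also have "\<dots> = (\<Sum>b\<in>Dl. \<Sum>a\<in>K. lam a * ca a b * E b p)" by (rule sum.swap)
  also have "\<dots> = (\<Sum>b\<in>Dl. scaleF (\<Sum>a\<in>K. lam a * ca a b) (E b)) p"
    by (simp add: sum_fun_apply sum_distrib_right)
  finally show "(\<Sum>a\<in>K. scaleF (lam a) (Fa a)) p = (\<Sum>b\<in>Dl. scaleF (\<Sum>a\<in>K. lam a * ca a b) (E b)) p" .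
qed

lemma Fa_key:
  assumes K: "K \<subseteq> Dl" and La: "La \<subseteq> Dl" and disj: "K \<inter> La = {}"
    and sp: "(\<Sum>a\<in>K. scaleF (lam a) (Fa a)) \<in> fspan (E ` La)"
  shows "\<forall>a\<in>K. lam a = 0"
proof (rule ccontr)
  assume nt: "\<not> (\<forall>a\<in>K. lam a = 0)"
  define N where "N = {a\<in>K. lam a \<noteq> 0}"
  have fK: "finite K" using K finite_Delta finite_subset by blast
  have N: "finite N" "N \<noteq> {}" "N \<subseteq> Zm m"
    using fK nt K Delta_Zm[of m s] by (auto simp: N_def)
  obtain a0 where a0: "a0 \<in> N" "\<forall>b\<in>N. b \<noteq> a0 \<longrightarrow> deglex_less m b a0"
    using exists_max[OF N] by blast
  have a0K: "a0 \<in> K" "lam a0 \<noteq> 0" using a0 by (auto simp: N_def)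
  have a0D: "a0 \<in> Dl" using a0K K by blast
  obtain y where y: "(\<Sum>a\<in>K. scaleF (lam a) (Fa a)) = (\<Sum>b\<in>Dl. scaleF (y b) (E b))"
    "\<forall>b. b \<notin> La \<longrightarrow> y b = 0"
    using span_E_coeffs[OF La sp] by blast
  have "(\<Sum>b\<in>Dl. scaleF (\<Sum>a\<in>K. lam a * ca a b) (E b)) = (\<Sum>b\<in>Dl. scaleF (y b) (E b))"
    using y(1) sum_Fa_expand[OF K] by simp
  from coeff_unique[OF this a0D] have "(\<Sum>a\<in>K. lam a * ca a a0) = y a0" .
  also have "\<dots> = 0" using y(2) a0K disj by blast
  finally have s0: "(\<Sum>a\<in>K. lam a * ca a a0) = 0" .
  have "(\<Sum>a\<in>K. lam a * ca a a0) = lam a0 * ca a0 a0"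
  proof (rule sum.remove[OF fK a0K(1), THEN trans])
    have "lam a * ca a a0 = 0" if a: "a \<in> K - {a0}" for a
    proof (rule ccontr)
      assume nz: "lam a * ca a a0 \<noteq> 0"
      then have "a \<in> N" using a by (auto simp: N_def)
      then have lt: "deglex_less m a a0" using a0 a by blast
      have "deglex_le m a0 a" using ca_nz_le[of a a0] nz a K a0D by auto
      then show False using lt lt_irrefl[of m a] lt_trans[of m a a0 a] by (auto simp: deglex_le_def)
    qed
    then have "(\<Sum>a\<in>K - {a0}. lam a * ca a a0) = 0" by (intro sum.neutral) blast
    then show "lam a0 * ca a0 a0 + (\<Sum>a\<in>K - {a0}. lam a * ca a a0) = lam a0 * ca a0 a0" by simp
  qed
  then show False using s0 a0K ca_self by simp
qed

definition idx :: "nat \<Rightarrow> 'a \<Rightarrow> nat" where "idx t y = the_inv_into {..<s} (x t) y"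

lemma idx_props:
  assumes "t \<in> {1..m}" "y \<in> S t" shows "idx t y < s" "x t (idx t y) = y"
proof -
  have b: "bij_betw (x t) {..<s} (S t)" using xbij assms(1) by blast
  have "the_inv_into {..<s} (x t) y \<in> {..<s}"
    by (rule bij_betw_apply[OF bij_betw_the_inv_into[OF b] assms(2)])
  then show "idx t y < s" by (simp add: idx_def)
  have "x t (the_inv_into {..<s} (x t) y) = y" by (rule f_the_inv_into_f_bij_betw[OF b]) (rule assms(2))
  then show "x t (idx t y) = y" by (simp add: idx_def)
qed

lemma Fa_nz:
  assumes "Fa a p \<noteq> 0" "t \<in> {1..m}" shows "p \<in> P" "a t \<le> idx t (p t)"
proof -
  show pP: "p \<in> P" using assms(1) by (auto simp: Fa_def split: if_splits)
  have ptS: "p t \<in> S t" using pP assms(2) by (auto simp: points_def)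
  have "(\<Prod>t\<in>{1..m}. \<Prod>j<a t. (p t - x t j)) \<noteq> 0" using assms(1) pP by (simp add: Fa_def)
  then have "(\<Prod>j<a t. (p t - x t j)) \<noteq> 0" using assms(2) by (auto simp: prod_zero_iff)
  then have ne: "\<forall>j<a t. p t \<noteq> x t j" by (auto simp: prod_zero_iff)
  show "a t \<le> idx t (p t)"
  proof (rule ccontr)
    assume "\<not> a t \<le> idx t (p t)"
    then have "idx t (p t) < a t" by simp
    then have "p t \<noteq> x t (idx t (p t))" using ne by blast
    then show False using idx_props(2)[OF assms(2) ptS] by simp
  qed
qed

lemma Supp_span:
  fixes X :: "((nat \<Rightarrow> 'a) \<Rightarrow> 'a) set"
  shows "Supp (fspan X) \<subseteq> Supp X"
proof -
  define W where "W = {f::(nat \<Rightarrow> 'a) \<Rightarrow> 'a. \<forall>p. p \<notin> Supp X \<longrightarrow> f p = 0}"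
  have "fsubspace W"
    unfolding fv.subspace_def W_def by simp
  moreover have "X \<subseteq> W" unfolding W_def Supp_def by blast
  ultimately have "fspan X \<subseteq> W" using fv.span_minimal by blast
  then show ?thesis unfolding W_def Supp_def by blast
qed

lemma primal_construct:
  assumes KLb: "K \<subseteq> Lb" and disj: "K \<inter> La = {}" and ISa: "IS La" and ISb: "IS Lb"
  shows "\<exists>U. fsubspace U \<and> U \<subseteq> fspan (E ` Lb) \<and> fdim U = card K \<and> U \<inter> fspan (E ` La) = {0}
           \<and> card (Supp U) \<le> Dfoot m s K"
proof -
  have KD: "K \<subseteq> Dl" using KLb ISb by (auto simp: IS_def)
  have LaD: "La \<subseteq> Dl" using ISa by (simp add: IS_def)
  have fK: "finite K" using KD finite_Delta finite_subset by blast
  have key0: "\<forall>a\<in>K. lam a = 0" if "(\<Sum>a\<in>K. scaleF (lam a) (Fa a)) = 0" for lam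
    by (rule Fa_key[OF KD, of "{}"]) (use that fv.span_zero in auto)
  have injF: "inj_on Fa K"
  proof
    fix a a' assume a: "a \<in> K" "a' \<in> K" "Fa a = Fa a'"
    show "a = a'"
    proof (rule ccontr)
      assume ne: "a \<noteq> a'"
      define lam where "lam c = (if c = a then 1 else if c = a' then -1 else (0::'a))" for c
      have "(\<Sum>c\<in>K. scaleF (lam c) (Fa c)) = (\<Sum>c\<in>{a, a'}. scaleF (lam c) (Fa c))"
        using a fK by (intro sum.mono_neutral_right) (auto simp: lam_def scaleF_def fun_eq_iff)
      also have "\<dots> = scaleF (lam a) (Fa a) + scaleF (lam a') (Fa a')" using ne by simp
      also have "\<dots> = 0"
      proof -
        have l: "lam a = 1" "lam a' = -1" using ne by (simp_all add: lam_def)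
        show ?thesis unfolding l using a(3) by (simp add: fun_eq_iff)
      qed
      finally have "lam a = 0" using key0 a by blast
      then show False by (simp add: lam_def)
    qed
  qed
  have indep: "fv.independent (Fa ` K)"
    apply (rule fv.independent_if_scalars_zero)
    subgoal using fK by simp
    subgoal for f v
    proof -
      assume s0: "(\<Sum>v\<in>Fa ` K. scaleF (f v) v) = 0" and v: "v \<in> Fa ` K"
      have "(\<Sum>a\<in>K. scaleF (f (Fa a)) (Fa a)) = 0"
        using s0 by (simp add: sum.reindex[OF injF])
      then have "\<forall>a\<in>K. f (Fa a) = 0" by (rule key0)
      then show "f v = 0" using v by blast
    qed
    done
  define U where "U = fspan (Fa ` K)"
  have dimU: "fdim U = card K"
    unfolding U_def fv.dim_span fv.dim_eq_card_independent[OF indep] using card_image[OF injF] .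
  have inter: "U \<inter> fspan (E ` La) = {0}"
  proof
    show "U \<inter> fspan (E ` La) \<subseteq> {0}"
    proof
      fix u assume u: "u \<in> U \<inter> fspan (E ` La)"
      then obtain g where g: "u = (\<Sum>v\<in>Fa ` K. scaleF (g v) v)"
        using fv.span_finite[of "Fa ` K"] fK by (auto simp: U_def)
      have u2: "u = (\<Sum>a\<in>K. scaleF (g (Fa a)) (Fa a))" using g by (simp add: sum.reindex[OF injF])
      have "\<forall>a\<in>K. g (Fa a) = 0" by (rule Fa_key[OF KD LaD disj]) (use u u2 in simp)
      then show "u \<in> {0}" using u2 by simp
    qed
    show "{0} \<subseteq> U \<inter> fspan (E ` La)" by (simp add: U_def fv.span_zero)
  qed
  have sub: "U \<subseteq> fspan (E ` Lb)"
  proof -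
    have "Fa a \<in> fspan (E ` Lb)" if a: "a \<in> K" for a
    proof -
      have "scaleF (ca a b) (E b) \<in> fspan (E ` Lb)" if b: "b \<in> Dl" for b
      proof (cases "ca a b = 0")
        case True then show ?thesis using fv.span_zero by (simp add: scaleF_def zero_fun_def)
      next
        case False
        then have "deglex_le m b a" using ca_nz_le a KD b by blast
        then have "b \<in> Lb" using ISb a KLb b by (auto simp: IS_def deglex_le_def)
        then show ?thesis by (intro fv.span_scale fv.span_base) auto
      qed
      then have "(\<Sum>b\<in>Dl. scaleF (ca a b) (E b)) \<in> fspan (E ` Lb)" by (intro fv.span_sum) auto
      moreover have "a \<in> Dl" using a KD by blast
      ultimately show ?thesis using Fa_expand by simp
    qed
    then show ?thesis unfolding U_def by (intro fv.span_minimal) auto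
  qed
  define \<iota> where "\<iota> p = (\<lambda>t. if t \<in> {1..m} then idx t (p t) else 0)" for p
  have "Supp U \<subseteq> Supp (Fa ` K)" unfolding U_def by (rule Supp_span)
  moreover have "Supp (Fa ` K) \<subseteq> {p\<in>P. \<exists>a\<in>K. \<forall>t\<in>{1..m}. a t \<le> idx t (p t)}"
  proof
    fix p assume "p \<in> Supp (Fa ` K)"
    then obtain a where a: "a \<in> K" "Fa a p \<noteq> 0" by (auto simp: Supp_def)
    then have "p \<in> P" by (auto simp: Fa_def split: if_splits)
    moreover have "\<forall>t\<in>{1..m}. a t \<le> idx t (p t)" using a Fa_nz(2) by blast
    ultimately show "p \<in> {p\<in>P. \<exists>a\<in>K. \<forall>t\<in>{1..m}. a t \<le> idx t (p t)}" using a by blast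
  qed
  ultimately have SuppU: "Supp U \<subseteq> {p\<in>P. \<exists>a\<in>K. \<forall>t\<in>{1..m}. a t \<le> idx t (p t)}"
    by blast
  have injI: "inj_on \<iota> P"
  proof
    fix p q assume pq: "p \<in> P" "q \<in> P" "\<iota> p = \<iota> q"
    show "p = q"
      using pq(1,2) unfolding points_def
    proof (rule PiE_ext)
      fix t assume t: "t \<in> {1..m}"
      have "idx t (p t) = idx t (q t)" using pq(3) t by (simp add: \<iota>_def fun_eq_iff) metis
      moreover have "p t \<in> S t" "q t \<in> S t" using pq t by (auto simp: points_def)
      ultimately show "p t = q t" using idx_props(2)[OF t] by metis
    qed
  qed
  have img: "\<iota> ` Supp U \<subseteq> {N \<in> Dl. \<exists>M\<in>K. mdvd M N}"
  proof
    fix N assume "N \<in> \<iota> ` Supp U"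
    then obtain p where p: "p \<in> Supp U" "N = \<iota> p" by blast
    then obtain a where a: "p \<in> P" "a \<in> K" "\<forall>t\<in>{1..m}. a t \<le> idx t (p t)" using SuppU by blast
    have ps: "p t \<in> S t" if "t \<in> {1..m}" for t using a(1) that by (auto simp: points_def)
    have "N \<in> Dl" using p idx_props(1)[OF _ ps] by (auto simp: \<iota>_def Delta_def)
    moreover have "mdvd a N"
      unfolding mdvd_def
    proof
      fix t show "a t \<le> N t"
      proof (cases "t \<in> {1..m}")
        case True then show ?thesis using a p by (simp add: \<iota>_def)
      next
        case False then show ?thesis using a(2) KD by (auto simp: Delta_def)
      qed
    qed
    ultimately show "N \<in> {N \<in> Dl. \<exists>M\<in>K. mdvd M N}" using a by blast
  qed
  have "card (Supp U) \<le> card {N \<in> Dl. \<exists>M\<in>K. mdvd M N}"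
  proof (rule card_inj_on_le)
    show "inj_on \<iota> (Supp U)" using injI SuppU inj_on_subset by blast
    show "\<iota> ` Supp U \<subseteq> {N \<in> Dl. \<exists>M\<in>K. mdvd M N}" by (rule img)
    show "finite {N \<in> Dl. \<exists>M\<in>K. mdvd M N}" using finite_Delta by simp
  qed
  then have "card (Supp U) \<le> Dfoot m s K" by (simp add: Dfoot_def)
  then show ?thesis using dimU inter sub by (auto simp: U_def)
qed

end

context grid begin

lemma exists_enum: "\<exists>x. \<forall>t\<in>{1..m}. bij_betw (x t) {..<s} (S t)"
proof -
  have "\<forall>t\<in>{1..m}. \<exists>h. bij_betw h {..<s} (S t)"
  proof
    fix t assume t: "t \<in> {1..m}"
    obtain h where "bij_betw h {0..<card (S t)} (S t)" using ex_bij_betw_nat_finite[of "S t"] by auto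
    then show "\<exists>h. bij_betw h {..<s} (S t)" using cardS t by (auto simp: atLeast0LessThan)
  qed
  then show ?thesis by (rule bchoice)
qed

lemma primal_construct_g:
  assumes "K \<subseteq> Lb" "K \<inter> La = {}" "IS La" "IS Lb"
  shows "\<exists>U. fsubspace U \<and> U \<subseteq> fspan (E ` Lb) \<and> fdim U = card K \<and> U \<inter> fspan (E ` La) = {0}
           \<and> card (Supp U) \<le> Dfoot m s K"
proof -
  obtain x where x: "\<forall>t\<in>{1..m}. bij_betw (x t) {..<s} (S t)" using exists_enum by blast
  interpret ge: grid_enum m s S x by unfold_locales (rule x)
  show ?thesis by (rule ge.primal_construct[OF assms])
qed

lemma subspace_dualcode: "fsubspace (dualcode P C)"
  unfolding fv.subspace_def dualcode_def
  by (auto simp: algebra_simps sum.distrib sum_distrib_left[symmetric])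

lemma ip_sum1: "ip (\<Sum>a\<in>K. f a) c = (\<Sum>a\<in>K. ip (f a) c)"
  unfolding ip_def by (simp add: sum_fun_apply sum_distrib_left) (rule sum.swap)

definition cq :: "(nat \<Rightarrow> 'a) \<Rightarrow> (nat \<Rightarrow> nat) \<Rightarrow> 'a" where
  "cq q = (SOME y. dl q = (\<Sum>b\<in>Dl. scaleF (y b) (E b)))"

definition wd :: "(nat \<Rightarrow> nat) \<Rightarrow> ((nat \<Rightarrow> 'a) \<Rightarrow> 'a)" where
  "wd a = (\<lambda>p. if p \<in> P then cq p a else 0)"

lemma cq_prop: "q \<in> P \<Longrightarrow> dl q = (\<Sum>b\<in>Dl. scaleF (cq q b) (E b))"
proof -
  assume q: "q \<in> P"
  have "\<exists>y. dl q = (\<Sum>b\<in>Dl. scaleF (y b) (E b))"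
    using span_E_coeffs[OF subset_refl dl_span[OF q]] by blast
  then show ?thesis unfolding cq_def by (rule someI_ex)
qed

lemma ip_wd:
  assumes a: "a \<in> Dl" and b: "b \<in> Dl"
  shows "ip (wd a) (E b) = (if a = b then 1 else 0)"
proof -
  have "E b = (\<Sum>p\<in>P. scaleF (E b p) (dl p))" by (rule VP_sum_dl[OF E_VP])
  also have "\<dots> = (\<Sum>b'\<in>Dl. scaleF (\<Sum>p\<in>P. E b p * cq p b') (E b'))"
  proof
    fix z
    have "(\<Sum>p\<in>P. scaleF (E b p) (dl p)) z = (\<Sum>p\<in>P. E b p * (\<Sum>b'\<in>Dl. cq p b' * E b' z))"
      by (auto simp: sum_fun_apply cq_prop intro!: sum.cong)
    also have "\<dots> = (\<Sum>p\<in>P. \<Sum>b'\<in>Dl. E b p * cq p b' * E b' z)"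
      by (simp add: sum_distrib_left mult.assoc)
    also have "\<dots> = (\<Sum>b'\<in>Dl. \<Sum>p\<in>P. E b p * cq p b' * E b' z)" by (rule sum.swap)
    also have "\<dots> = (\<Sum>b'\<in>Dl. scaleF (\<Sum>p\<in>P. E b p * cq p b') (E b')) z"
      by (simp add: sum_fun_apply sum_distrib_right)
    finally show "(\<Sum>p\<in>P. scaleF (E b p) (dl p)) z = (\<Sum>b'\<in>Dl. scaleF (\<Sum>p\<in>P. E b p * cq p b') (E b')) z" .
  qed
  finally have e1: "E b = (\<Sum>b'\<in>Dl. scaleF (\<Sum>p\<in>P. E b p * cq p b') (E b'))" .
  have e2: "E b = (\<Sum>b'\<in>Dl. scaleF (if b' = b then 1 else 0) (E b'))"
  proof
    fix z
    have "(\<Sum>b'\<in>Dl. scaleF (if b' = b then 1 else 0) (E b')) z = (\<Sum>b'\<in>Dl. if b' = b then E b' z else 0)"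
      by (auto simp: sum_fun_apply intro!: sum.cong)
    also have "\<dots> = E b z" using b finite_Delta by simp
    finally show "E b z = (\<Sum>b'\<in>Dl. scaleF (if b' = b then 1 else 0) (E b')) z" by simp
  qed
  have "(\<Sum>p\<in>P. E b p * cq p a) = (if a = b then 1 else 0)"
    using coeff_unique[OF _ a, of "\<lambda>b'. \<Sum>p\<in>P. E b p * cq p b'" "\<lambda>b'. if b' = b then 1 else 0"] e1 e2
    by simp
  moreover have "ip (wd a) (E b) = (\<Sum>p\<in>P. E b p * cq p a)"
    unfolding ip_def wd_def by (intro sum.cong) auto
  ultimately show ?thesis by simp
qed

lemma ip_sum_wd:
  assumes K: "K \<subseteq> Dl" and b: "b \<in> K"
  shows "ip (\<Sum>a\<in>K. scaleF (lam a) (wd a)) (E b) = lam b"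
proof -
  have fK: "finite K" using K finite_Delta finite_subset by blast
  have "ip (\<Sum>a\<in>K. scaleF (lam a) (wd a)) (E b) = (\<Sum>a\<in>K. lam a * ip (wd a) (E b))"
    by (simp add: ip_sum1 ip_scale1)
  also have "\<dots> = (\<Sum>a\<in>K. if a = b then lam a else 0)"
  proof (intro sum.cong refl)
    fix a assume "a \<in> K"
    then have "a \<in> Dl" "b \<in> Dl" using K b by blast+
    then show "lam a * ip (wd a) (E b) = (if a = b then lam a else 0)" by (simp add: ip_wd)
  qed
  also have "\<dots> = lam b" using fK b by simp
  finally show ?thesis .
qed

lemma dual_construct:
  assumes KLb: "K \<subseteq> Lb" and disj: "K \<inter> La = {}" and ISa: "IS La" and ISb: "IS Lb"
  shows "\<exists>U. fsubspace U \<and> U \<subseteq> dualcode P (fspan (E ` La)) \<and> fdim U = card K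
           \<and> U \<inter> dualcode P (fspan (E ` Lb)) = {0}"
proof -
  have KD: "K \<subseteq> Dl" using KLb ISb by (auto simp: IS_def)
  have LaD: "La \<subseteq> Dl" using ISa by (simp add: IS_def)
  have fK: "finite K" using KD finite_Delta finite_subset by blast
  have injW: "inj_on wd K"
  proof
    fix a a' assume a: "a \<in> K" "a' \<in> K" "wd a = wd a'"
    have aD: "a \<in> Dl" "a' \<in> Dl" using a KD by blast+
    have "ip (wd a) (E a) = 1" using ip_wd[OF aD(1) aD(1)] by simp
    moreover have "ip (wd a') (E a) = (if a' = a then 1 else 0)" by (rule ip_wd[OF aD(2) aD(1)])
    ultimately have "(if a' = a then 1 else (0::'a)) = 1" using a(3) by simp
    then show "a = a'" by (auto split: if_splits)
  qed
  have key: "\<forall>a\<in>K. lam a = 0" if "\<forall>b\<in>K. ip (\<Sum>a\<in>K. scaleF (lam a) (wd a)) (E b) = 0" for lam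
    using that ip_sum_wd[OF KD] by simp
  have indep: "fv.independent (wd ` K)"
    apply (rule fv.independent_if_scalars_zero)
    subgoal using fK by simp
    subgoal for f v
    proof -
      assume s0: "(\<Sum>v\<in>wd ` K. scaleF (f v) v) = 0" and v: "v \<in> wd ` K"
      have "(\<Sum>a\<in>K. scaleF (f (wd a)) (wd a)) = 0"
        using s0 by (simp add: sum.reindex[OF injW])
      then have "\<forall>b\<in>K. ip (\<Sum>a\<in>K. scaleF (f (wd a)) (wd a)) (E b) = 0" by (simp add: ip_def)
      then have "\<forall>a\<in>K. f (wd a) = 0" by (rule key)
      then show "f v = 0" using v by blast
    qed
    done
  define U where "U = fspan (wd ` K)"
  have dimU: "fdim U = card K"
    unfolding U_def fv.dim_span fv.dim_eq_card_independent[OF indep] using card_image[OF injW] .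
  have sub: "U \<subseteq> dualcode P (fspan (E ` La))"
    unfolding U_def
  proof (rule fv.span_minimal[OF _ subspace_dualcode], rule subsetI)
    fix v assume "v \<in> wd ` K"
    then obtain a where a: "a \<in> K" "v = wd a" by blast
    have "ip (wd a) c = 0" if c: "c \<in> fspan (E ` La)" for c
    proof (rule ip_span_zero[OF _ c], rule ballI)
      fix c' assume "c' \<in> E ` La"
      then obtain b where b: "b \<in> La" "c' = E b" by blast
      have "a \<noteq> b" using a b disj by blast
      moreover have "a \<in> Dl" "b \<in> Dl" using a b KD LaD by blast+
      ultimately show "ip (wd a) c' = 0" using b by (simp add: ip_wd)
    qed
    then show "v \<in> dualcode P (fspan (E ` La))"
      using a by (auto simp: dualcode_def wd_def ip_def)
  qed
  have inter: "U \<inter> dualcode P (fspan (E ` Lb)) = {0}"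
  proof
    show "U \<inter> dualcode P (fspan (E ` Lb)) \<subseteq> {0}"
    proof
      fix u assume u: "u \<in> U \<inter> dualcode P (fspan (E ` Lb))"
      then obtain g where g: "u = (\<Sum>v\<in>wd ` K. scaleF (g v) v)"
        using fv.span_finite[of "wd ` K"] fK by (auto simp: U_def)
      have u2: "u = (\<Sum>a\<in>K. scaleF (g (wd a)) (wd a))" using g by (simp add: sum.reindex[OF injW])
      have "\<forall>b\<in>K. ip u (E b) = 0"
      proof
        fix b assume "b \<in> K"
        then have "E b \<in> fspan (E ` Lb)" using KLb by (intro fv.span_base) auto
        then show "ip u (E b) = 0" using u by (auto simp: dualcode_def ip_def)
      qed
      then have "\<forall>a\<in>K. g (wd a) = 0" using key[of "\<lambda>a. g (wd a)"] u2 by simp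
      then show "u \<in> {0}" using u2 by simp
    qed
    show "{0} \<subseteq> U \<inter> dualcode P (fspan (E ` Lb))"
      using fv.subspace_0[OF subspace_dualcode] by (simp add: U_def fv.span_zero)
  qed
  show ?thesis using dimU sub inter by (auto simp: U_def)
qed

end


lemma rightmost:
  assumes "deglex_less m a b" "(\<Sum>t=1..m. a t) = (\<Sum>t=1..m. b t)" "u0 \<in> {1..m}" "a u0 \<noteq> b u0"
    "\<forall>u\<in>{u0<..m}. a u = b u"
  shows "a u0 < b u0"
proof -
  obtain t where t: "t \<in> {1..m}" "a t < b t" "\<forall>u\<in>{t<..m}. a u = b u"
    using assms(1,2) by (auto simp: deglex_less_def)
  have "t = u0"
  proof (rule ccontr)
    assume "t \<noteq> u0"
    then consider "t < u0" | "u0 < t" by linarith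
    then show False
    proof cases
      case 1 then show False using t(3) assms(3,4) by auto
    next
      case 2 then show False using t(1,2) assms(5) by auto
    qed
  qed
  then show ?thesis using t by simp
qed

locale thm_setting = grid +
  fixes i :: "nat \<Rightarrow> nat"
  assumes m2: "2 \<le> m" and iD: "i \<in> Delta m s" and i12: "i 1 \<le> i 2"
begin

definition "i' = i(1 := i 2, 2 := i 1)"
definition "d = i 2 - i 1"
definition "tau w = i(1 := i 2 - w, 2 := i 1 + w)"
definition "L1 = {N \<in> Dl. deglex_le m N i}"
definition "L2 = {N \<in> Dl. deglex_less m N i'}"
definition "T = {tau w | w. w \<in> {0..d}}"

lemma sum_split: "(\<Sum>t=1..m. f t) = f 1 + f 2 + (\<Sum>t=3..m. f t)"
proof -
  have "{1..m} = insert 1 (insert 2 {3..m})" using m2 by auto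
  then show ?thesis by (simp add: add.assoc)
qed

lemma i_lt: "i 1 < s" "i 2 < s" using iD m2 by (auto simp: Delta_def)

lemma tau_D: "w \<le> d \<Longrightarrow> tau w \<in> Dl"
  using iD i_lt i12 by (auto simp: Delta_def tau_def d_def)

lemma tau_deg: "w \<le> d \<Longrightarrow> (\<Sum>t=1..m. tau w t) = (\<Sum>t=1..m. i t)"
proof -
  assume w: "w \<le> d"
  have "(\<Sum>t=3..m. tau w t) = (\<Sum>t=3..m. i t)" by (intro sum.cong) (auto simp: tau_def)
  then show ?thesis unfolding sum_split[of "tau w"] sum_split[of i] using w i12
    by (simp add: tau_def d_def)
qed

lemma tau0: "tau 0 = i'" by (simp add: tau_def i'_def)
lemma taud: "tau d = i" using i12 by (auto simp: tau_def d_def fun_eq_iff)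

lemma tau_lt: "w < w' \<Longrightarrow> w' \<le> d \<Longrightarrow> deglex_less m (tau w) (tau w')"
proof -
  assume ww: "w < w'" "w' \<le> d"
  have "\<exists>t\<in>{1..m}. tau w t < tau w' t \<and> (\<forall>u\<in>{t<..m}. tau w u = tau w' u)"
    using ww m2 by (intro bexI[of _ 2]) (auto simp: tau_def)
  then show ?thesis using tau_deg ww by (simp add: deglex_less_def)
qed

lemma tau_inj: "inj_on tau {0..d}"
proof
  fix w w' assume "tau w = tau w'"
  then have "tau w 2 = tau w' 2" by simp
  then show "w = w'" by (simp add: tau_def)
qed

lemma card_T: "card T = d + 1"
proof -
  have "T = tau ` {0..d}" by (auto simp: T_def)
  then show ?thesis using card_image[OF tau_inj] by simp
qed

lemma finite_T: "finite T" by (simp add: T_def)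

lemma IS_L1: "IS L1"
  unfolding IS_def L1_def deglex_le_def using lt_trans by blast

lemma IS_L2: "IS L2"
  unfolding IS_def L2_def using lt_trans by blast

lemma tau_le_i: "w \<le> d \<Longrightarrow> deglex_le m (tau w) i"
  using tau_lt[of w d] taud by (cases "w = d") (auto simp: deglex_le_def)

lemma i'_le_i: "deglex_le m i' i" using tau_le_i[of 0] tau0 by simp

lemma L2_sub_L1: "L2 \<subseteq> L1"
  using i'_le_i by (auto simp: L1_def L2_def deglex_le_def intro: lt_trans)

lemma T_sub_L1: "T \<subseteq> L1"
  using tau_le_i tau_D by (auto simp: T_def L1_def)

lemma T_L2: "T \<inter> L2 = {}"
proof -
  have "\<not> deglex_less m (tau w) i'" if "w \<le> d" for w
  proof
    assume a: "deglex_less m (tau w) i'"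
    show False
    proof (cases "w = 0")
      case True then show False using a tau0 lt_irrefl by metis
    next
      case False
      then have "deglex_less m i' (tau w)" using tau_lt[of 0 w] that tau0 by simp
      then show False using a lt_trans lt_irrefl by metis
    qed
  qed
  then show ?thesis by (auto simp: T_def L2_def)
qed

lemma iZ: "i \<in> Zm m" using iD Delta_Zm by blast
lemma i'Z: "i' \<in> Zm m" using tau_D[of 0] tau0 Delta_Zm by auto

lemma interval:
  assumes N: "N \<in> Dl" "deglex_le m N i" "\<not> deglex_less m N i'"
  shows "N \<in> T"
proof -
  have NZ: "N \<in> Zm m" using N Delta_Zm by blast
  have h1: "deglex_le m i' N"
  proof (cases "N = i'")
    case True then show ?thesis by (simp add: deglex_le_def)
  next
    case False then show ?thesis using lt_total[OF NZ i'Z] N(3) by (auto simp: deglex_le_def)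
  qed
  have di: "(\<Sum>t=1..m. i' t) = (\<Sum>t=1..m. i t)" using tau_deg[of 0] tau0 by simp
  have dN: "(\<Sum>t=1..m. N t) = (\<Sum>t=1..m. i t)"
    using lt_deg_le[of m N i] lt_deg_le[of m i' N] N(2) h1 di by (auto simp: deglex_le_def)
  have i'i: "i' u = i u" if "u \<ge> 3" for u using that by (simp add: i'_def)
  have agree3: "\<forall>u\<in>{3..m}. N u = i u"
  proof (rule ccontr)
    assume nt: "\<not> (\<forall>u\<in>{3..m}. N u = i u)"
    define D where "D = {u\<in>{3..m}. N u \<noteq> i u}"
    have fD: "finite D" "D \<noteq> {}" using nt by (auto simp: D_def)
    define u0 where "u0 = Max D"
    have u0: "u0 \<in> D" using fD by (simp add: u0_def)
    have u0m: "u0 \<in> {1..m}" "u0 \<ge> 3" using u0 by (auto simp: D_def)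
    have above: "\<forall>u\<in>{u0<..m}. N u = i u"
    proof
      fix u assume u: "u \<in> {u0<..m}"
      show "N u = i u"
      proof (rule ccontr)
        assume "N u \<noteq> i u"
        then have "u \<in> D" using u u0m by (auto simp: D_def)
        then have "u \<le> u0" using fD by (simp add: u0_def)
        then show False using u by auto
      qed
    qed
    have ne: "N u0 \<noteq> i u0" using u0 by (simp add: D_def)
    have "N \<noteq> i" using ne by auto
    then have "deglex_less m N i" using N(2) by (simp add: deglex_le_def)
    then have lt1: "N u0 < i u0" by (rule rightmost[OF _ dN u0m(1) ne above])
    have "i' \<noteq> N" using ne i'i[OF u0m(2)] by auto
    then have "deglex_less m i' N" using h1 by (simp add: deglex_le_def)
    moreover have "\<forall>u\<in>{u0<..m}. i' u = N u" using above i'i u0m by auto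
    ultimately have "i' u0 < N u0"
      using rightmost[of m i' N u0] di dN u0m ne i'i[OF u0m(2)] by auto
    then show False using lt1 i'i[OF u0m(2)] by simp
  qed
  have s3: "(\<Sum>t=3..m. N t) = (\<Sum>t=3..m. i t)" using agree3 by (intro sum.cong) auto
  have sum12: "N 1 + N 2 = i 1 + i 2" using dN s3 unfolding sum_split[of N] sum_split[of i] by simp
  have N2le: "N 2 \<le> i 2"
  proof (cases "N = i")
    case True then show ?thesis by simp
  next
    case False
    then have "deglex_less m N i" using N(2) by (simp add: deglex_le_def)
    then obtain t where t: "t \<in> {1..m}" "N t < i t" "\<forall>u\<in>{t<..m}. N u = i u"
      using dN by (auto simp: deglex_less_def)
    have "t = 1 \<or> t = 2" using t agree3 by (cases "t \<ge> 3") auto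
    moreover have "t = 1 \<Longrightarrow> N 2 = i 2" using t(3) m2 by (intro bspec[OF t(3)]) auto
    ultimately show ?thesis using t m2 by auto
  qed
  have N2ge: "i 1 \<le> N 2"
  proof (cases "i' = N")
    case True then show ?thesis by (auto simp: i'_def)
  next
    case False
    then have "deglex_less m i' N" using h1 by (simp add: deglex_le_def)
    then obtain t where t: "t \<in> {1..m}" "i' t < N t" "\<forall>u\<in>{t<..m}. i' u = N u"
      using dN di by (auto simp: deglex_less_def)
    have "t = 1 \<or> t = 2" using t agree3 i'i by (cases "t \<ge> 3") auto
    moreover have "t = 1 \<Longrightarrow> i' 2 = N 2" using t(3) m2 by (intro bspec[OF t(3)]) auto
    ultimately show ?thesis using t m2 by (auto simp: i'_def)
  qed
  define w where "w = N 2 - i 1"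
  have wd: "w \<le> d" using N2le by (simp add: w_def d_def)
  have "N = tau w"
  proof
    fix t
    show "N t = tau w t"
    proof (cases "t = 1 \<or> t = 2")
      case True then show ?thesis using sum12 N2ge N2le by (auto simp: tau_def w_def)
    next
      case False
      show ?thesis
      proof (cases "t \<in> {3..m}")
        case True then show ?thesis using agree3 False by (auto simp: tau_def)
      next
        case f2: False
        then have "t \<notin> {1..m}" using False by auto
        then show ?thesis using N(1) iD False by (auto simp: tau_def Delta_def)
      qed
    qed
  qed
  then show ?thesis using wd by (auto simp: T_def)
qed

lemma L1_eq: "L1 = L2 \<union> T" and L1_minus: "L1 - L2 = T"
proof -
  have "L1 - L2 \<subseteq> T" using interval by (auto simp: L1_def L2_def)
  then show "L1 = L2 \<union> T" "L1 - L2 = T" using L2_sub_L1 T_sub_L1 T_L2 by blast+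
qed

end


lemma Min_eq_from:
  fixes A B :: "nat set"
  assumes "finite A" "finite B" "B \<noteq> {}" "\<forall>x\<in>A. \<exists>y\<in>B. y \<le> x" "\<forall>y\<in>B. \<exists>x\<in>A. x \<le> y"
  shows "Min A = Min B"
proof -
  have An: "A \<noteq> {}" using assms(3,5) by auto
  obtain y where y: "y \<in> B" "y \<le> Min A" using assms(4) Min_in[OF assms(1) An] by blast
  obtain x where x: "x \<in> A" "x \<le> Min B" using assms(5) Min_in[OF assms(2,3)] by blast
  have "Min B \<le> Min A" using y Min_le[OF assms(2)] by (meson order_trans)
  moreover have "Min A \<le> Min B" using x Min_le[OF assms(1)] by (meson order_trans)
  ultimately show ?thesis by simp
qed

lemma Min_ge_from:
  fixes A B :: "nat set"
  assumes "finite A" "A \<noteq> {}" "finite B" "\<forall>x\<in>A. \<exists>y\<in>B. y \<le> x"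
  shows "Min B \<le> Min A"
proof -
  obtain y where y: "y \<in> B" "y \<le> Min A" using assms(4) Min_in[OF assms(1,2)] by blast
  then show ?thesis using Min_le[OF assms(3)] by (meson order_trans)
qed

lemma ar1:
  fixes a b s w :: nat
  assumes "a \<le> b" "b < s" "w \<le> b - a"
  shows "(s - a) * (s - b) \<le> (s - (b - w)) * (s - (a + w))"
proof -
  define k where "k = b - a - w"
  have k: "b = a + w + k" using assms by (simp add: k_def)
  define r where "r = s - b - 1"
  have r: "s = b + 1 + r" using assms by (simp add: r_def)
  have "(s - (b - w)) * (s - (a + w)) = (r + 1 + w) * (k + r + 1)" using k r by simp
  also have "\<dots> = (w + k + r + 1) * (r + 1) + w * k" by (simp add: algebra_simps)
  also have "(w + k + r + 1) * (r + 1) = (s - a) * (s - b)" using k r by simp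
  finally show ?thesis by simp
qed

lemma ar2:
  fixes a b w :: nat
  assumes "a \<le> b" "w \<le> b - a"
  shows "(a + 1) * (b + 1) \<le> (b - w + 1) * (a + w + 1)"
proof -
  define k where "k = b - a - w"
  have k: "b = a + w + k" using assms by (simp add: k_def)
  have "(b - w + 1) * (a + w + 1) = (a + k + 1) * (a + w + 1)" using k by simp
  also have "\<dots> = (a + 1) * (a + w + k + 1) + w * k" by (simp add: algebra_simps)
  also have "(a + 1) * (a + w + k + 1) = (a + 1) * (b + 1)" using k by simp
  finally show ?thesis by simp
qed

context grid begin

lemma Dfoot_single:
  assumes a: "a \<in> Dl" shows "Dfoot m s {a} = (\<Prod>t\<in>{1..m}. s - a t)"
proof -
  have eq: "{N \<in> Dl. \<exists>M\<in>{a}. mdvd M N} = {N. (\<forall>t\<in>{1..m}. N t \<in> {a t..<s}) \<and> (\<forall>t. t \<notin> {1..m} \<longrightarrow> N t = 0)}"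
  proof (intro set_eqI iffI)
    fix N assume "N \<in> {N \<in> Dl. \<exists>M\<in>{a}. mdvd M N}"
    then show "N \<in> {N. (\<forall>t\<in>{1..m}. N t \<in> {a t..<s}) \<and> (\<forall>t. t \<notin> {1..m} \<longrightarrow> N t = 0)}"
      by (auto simp: Delta_def mdvd_def)
  next
    fix N assume N: "N \<in> {N. (\<forall>t\<in>{1..m}. N t \<in> {a t..<s}) \<and> (\<forall>t. t \<notin> {1..m} \<longrightarrow> N t = 0)}"
    then have "N \<in> Dl" by (auto simp: Delta_def)
    moreover have "mdvd a N" unfolding mdvd_def
    proof
      fix t show "a t \<le> N t"
        using N a by (cases "t \<in> {1..m}") (auto simp: Delta_def)
    qed
    ultimately show "N \<in> {N \<in> Dl. \<exists>M\<in>{a}. mdvd M N}" by blast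
  qed
  have "card {N. (\<forall>t\<in>{1..m}. N t \<in> {a t..<s}) \<and> (\<forall>t. t \<notin> {1..m} \<longrightarrow> N t = 0)}
      = card (PiE {1..m} (\<lambda>t. {a t..<s}))"
    using bij_betw_same_card[OF ext_bij[of "{1..m}" "\<lambda>t. {a t..<s}"]] by simp
  also have "\<dots> = (\<Prod>t\<in>{1..m}. s - a t)" by (simp add: card_PiE)
  finally show ?thesis unfolding Dfoot_def eq .
qed

lemma Dperp_single:
  assumes a: "a \<in> Dl" shows "Dperp m s {a} = (\<Prod>t\<in>{1..m}. a t + 1)"
proof -
  have eq: "{N \<in> Dl. \<exists>M\<in>{a}. mdvd N M} = {N. (\<forall>t\<in>{1..m}. N t \<in> {..a t}) \<and> (\<forall>t. t \<notin> {1..m} \<longrightarrow> N t = 0)}"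
  proof (intro set_eqI iffI)
    fix N assume "N \<in> {N \<in> Dl. \<exists>M\<in>{a}. mdvd N M}"
    then show "N \<in> {N. (\<forall>t\<in>{1..m}. N t \<in> {..a t}) \<and> (\<forall>t. t \<notin> {1..m} \<longrightarrow> N t = 0)}"
      by (auto simp: Delta_def mdvd_def)
  next
    fix N assume N: "N \<in> {N. (\<forall>t\<in>{1..m}. N t \<in> {..a t}) \<and> (\<forall>t. t \<notin> {1..m} \<longrightarrow> N t = 0)}"
    have "N t < s" if "t \<in> {1..m}" for t
      using N a that le_less_trans[of "N t" "a t" s] by (auto simp: Delta_def)
    then have "N \<in> Dl" using N by (auto simp: Delta_def)
    moreover have "mdvd N a" unfolding mdvd_def
    proof
      fix t show "N t \<le> a t"
        using N a by (cases "t \<in> {1..m}") (auto simp: Delta_def)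
    qed
    ultimately show "N \<in> {N \<in> Dl. \<exists>M\<in>{a}. mdvd N M}" by blast
  qed
  have "card {N. (\<forall>t\<in>{1..m}. N t \<in> {..a t}) \<and> (\<forall>t. t \<notin> {1..m} \<longrightarrow> N t = 0)}
      = card (PiE {1..m} (\<lambda>t. {..a t}))"
    using bij_betw_same_card[OF ext_bij[of "{1..m}" "\<lambda>t. {..a t}"]] by simp
  also have "\<dots> = (\<Prod>t\<in>{1..m}. a t + 1)" by (simp add: card_PiE)
  finally show ?thesis unfolding Dperp_def eq .
qed

lemma fdim_CL: "L \<subseteq> Dl \<Longrightarrow> fdim (evcode m S L) = card L"
proof -
  assume L: "L \<subseteq> Dl"
  have "fv.independent (E ` L)" using fv.independent_mono[OF indep_E] L by blast
  then have "fdim (evcode m S L) = card (E ` L)"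
    unfolding evcode_def fv.dim_span by (rule fv.dim_eq_card_independent)
  also have "\<dots> = card L" using card_image inj_on_subset[OF inj_E L] by blast
  finally show ?thesis .
qed

end

context thm_setting begin

lemma L1D: "L1 \<subseteq> Dl" and L2D: "L2 \<subseteq> Dl" using IS_L1 IS_L2 by (auto simp: IS_def)

lemma card_split_G:
  "card (Dl \<inter> {a. Gz Z a}) + card (Dl \<inter> {a. \<not> Gz Z a}) = card Dl"
proof -
  have "Dl = (Dl \<inter> {a. Gz Z a}) \<union> (Dl \<inter> {a. \<not> Gz Z a})" by blast
  moreover have "(Dl \<inter> {a. Gz Z a}) \<inter> (Dl \<inter> {a. \<not> Gz Z a}) = {}" by blast
  ultimately show ?thesis using card_Un_disjoint[of "Dl \<inter> {a. Gz Z a}" "Dl \<inter> {a. \<not> Gz Z a}"] finite_Delta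
    by (metis finite_Int)
qed

lemma B_props:
  assumes v: "v \<le> d + 1"
  shows "finite {F K | K. K \<subseteq> T \<and> card K = v}" "{F K | K. K \<subseteq> T \<and> card K = v} \<noteq> {}"
proof -
  have "{F K | K. K \<subseteq> T \<and> card K = v} \<subseteq> F ` Pow T" by auto
  then show "finite {F K | K. K \<subseteq> T \<and> card K = v}" using finite_T finite_subset by blast
  obtain K where "K \<subseteq> T" "card K = v" using obtain_subset_with_card_n[of v T] v card_T by auto
  then show "{F K | K. K \<subseteq> T \<and> card K = v} \<noteq> {}" by blast
qed

lemma primal_eq:
  assumes v: "v \<le> d + 1"
  shows "RGHW v (evcode m S L1) (evcode m S L2) = Min {Dfoot m s K | K. K \<subseteq> T \<and> card K = v}"
proof -
  define A where "A = {card (Supp U) | U. fsubspace U \<and> U \<subseteq> evcode m S L1 \<and> fdim U = v \<and> U \<inter> evcode m S L2 = {0}}"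
  have RA: "RGHW v (evcode m S L1) (evcode m S L2) = Min A" by (simp add: RGHW_def A_def)
  have finA: "finite A"
  proof (rule finite_subset[of _ "{..card P}"])
    show "A \<subseteq> {..card P}"
    proof
      fix x assume "x \<in> A"
      then obtain U where U: "x = card (Supp U)" "U \<subseteq> evcode m S L1" by (auto simp: A_def)
      have "U \<subseteq> VP" using U(2) span_E_VP by (auto simp: evcode_def)
      then have "Supp U \<subseteq> P" by (auto simp: Supp_def VP_def)
      then show "x \<in> {..card P}" using U(1) card_mono[OF finite_P] by auto
    qed
  qed simp
  have lower: "\<forall>x\<in>A. \<exists>y\<in>{Dfoot m s K | K. K \<subseteq> T \<and> card K = v}. y \<le> x"
  proof
    fix x assume "x \<in> A"
    then obtain U where U: "x = card (Supp U)" "fsubspace U" "U \<subseteq> fspan (E ` L1)" "fdim U = v"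
      "U \<inter> fspan (E ` L2) = {0}" by (auto simp: A_def evcode_def)
    have "U \<subseteq> VP" using U(3) span_E_VP by auto
    then have SP: "Supp U \<subseteq> P" by (auto simp: Supp_def VP_def)
    define Z where "Z = P - Supp U"
    have ZP: "Z \<subseteq> P" by (simp add: Z_def)
    have Zv: "\<forall>u\<in>U. \<forall>p\<in>Z. u p = 0" by (auto simp: Z_def Supp_def)
    have "fdim U \<le> card ((L1 - L2) \<inter> {a. Gz Z a})"
      by (rule gen_primal[OF U(2,3,5) Zv IS_L2 IS_L1 L2_sub_L1])
    then have "v \<le> card (T \<inter> {a. Gz Z a})" unfolding U(4) L1_minus .
    then obtain K where K: "K \<subseteq> T \<inter> {a. Gz Z a}" "card K = v"
      by (rule obtain_subset_with_card_n)
    have "Dfoot m s K \<le> card (Dl \<inter> {a. Gz Z a})"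
      unfolding Dfoot_def
    proof (rule card_mono)
      show "finite (Dl \<inter> {a. Gz Z a})" using finite_Delta by simp
      show "{N \<in> Dl. \<exists>M\<in>K. mdvd M N} \<subseteq> Dl \<inter> {a. Gz Z a}"
        using K Gz_up by blast
    qed
    also have "\<dots> \<le> card P - card Z"
      using card_split_G[of Z] count_nonG[OF ZP] card_Delta card_P by simp
    also have "\<dots> = card (Supp U)"
      using SP finite_P card_mono[OF finite_P SP] by (simp add: Z_def card_Diff_subset finite_subset double_diff)
    finally show "\<exists>y\<in>{Dfoot m s K | K. K \<subseteq> T \<and> card K = v}. y \<le> x" using K U(1) by blast
  qed
  have upper: "\<forall>y\<in>{Dfoot m s K | K. K \<subseteq> T \<and> card K = v}. \<exists>x\<in>A. x \<le> y"
  proof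
    fix y assume "y \<in> {Dfoot m s K | K. K \<subseteq> T \<and> card K = v}"
    then obtain K where K: "y = Dfoot m s K" "K \<subseteq> T" "card K = v" by blast
    have "K \<subseteq> L1" "K \<inter> L2 = {}" using K T_sub_L1 T_L2 by auto
    then obtain U where U: "fsubspace U" "U \<subseteq> fspan (E ` L1)" "fdim U = card K"
      "U \<inter> fspan (E ` L2) = {0}" "card (Supp U) \<le> Dfoot m s K"
      using primal_construct_g[OF _ _ IS_L2 IS_L1] by blast
    then have "card (Supp U) \<in> A" using K by (auto simp: A_def evcode_def)
    then show "\<exists>x\<in>A. x \<le> y" using U(5) K(1) by blast
  qed
  show ?thesis unfolding RA
    by (rule Min_eq_from[OF finA B_props[where F="Dfoot m s", OF v] lower upper])
qed

lemma dual_ge: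
  assumes v: "v \<le> d + 1"
  shows "Min {Dperp m s K | K. K \<subseteq> T \<and> card K = v}
     \<le> RGHW v (dualcode P (evcode m S L2)) (dualcode P (evcode m S L1))"
proof -
  define A where "A = {card (Supp U) | U. fsubspace U \<and> U \<subseteq> dualcode P (evcode m S L2) \<and> fdim U = v
                        \<and> U \<inter> dualcode P (evcode m S L1) = {0}}"
  have RA: "RGHW v (dualcode P (evcode m S L2)) (dualcode P (evcode m S L1)) = Min A"
    by (simp add: RGHW_def A_def)
  have finA: "finite A"
  proof (rule finite_subset[of _ "{..card P}"])
    show "A \<subseteq> {..card P}"
    proof
      fix x assume "x \<in> A"
      then obtain U where U: "x = card (Supp U)" "U \<subseteq> dualcode P (evcode m S L2)" by (auto simp: A_def)
      then have "Supp U \<subseteq> P" by (auto simp: Supp_def dualcode_def)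
      then show "x \<in> {..card P}" using U(1) card_mono[OF finite_P] by auto
    qed
  qed simp
  have neA: "A \<noteq> {}"
  proof -
    obtain K where K: "K \<subseteq> T" "card K = v" using obtain_subset_with_card_n[of v T] v card_T by auto
    have "K \<subseteq> L1" "K \<inter> L2 = {}" using K T_sub_L1 T_L2 by auto
    then obtain U where "fsubspace U" "U \<subseteq> dualcode P (fspan (E ` L2))" "fdim U = card K"
      "U \<inter> dualcode P (fspan (E ` L1)) = {0}"
      using dual_construct[OF _ _ IS_L2 IS_L1] by blast
    then have "card (Supp U) \<in> A" using K by (auto simp: A_def evcode_def)
    then show ?thesis by blast
  qed
  have lower: "\<forall>x\<in>A. \<exists>y\<in>{Dperp m s K | K. K \<subseteq> T \<and> card K = v}. y \<le> x"
  proof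
    fix x assume "x \<in> A"
    then obtain U where U: "x = card (Supp U)" "fsubspace U" "U \<subseteq> dualcode P (fspan (E ` L2))" "fdim U = v"
      "U \<inter> dualcode P (fspan (E ` L1)) = {0}" by (auto simp: A_def evcode_def)
    define J where "J = Supp U"
    have JP: "J \<subseteq> P" using U(3) by (auto simp: J_def Supp_def dualcode_def)
    have Jv: "\<forall>u\<in>U. \<forall>p. p \<notin> J \<longrightarrow> u p = 0" by (auto simp: J_def Supp_def)
    have perpa: "\<forall>u\<in>U. \<forall>c\<in>fspan (E ` L2). ip u c = 0"
      using U(3) by (auto simp: dualcode_def ip_def)
    have trivb: "\<forall>u\<in>U. (\<forall>c\<in>fspan (E ` L1). ip u c = 0) \<longrightarrow> u = 0"
    proof (intro ballI impI)
      fix u assume u: "u \<in> U" and c: "\<forall>c\<in>fspan (E ` L1). ip u c = 0"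
      have "u \<in> dualcode P (fspan (E ` L1))"
        using u U(3) c by (auto simp: dualcode_def ip_def)
      then show "u = 0" using u U(5) by blast
    qed
    have "fdim U \<le> card ((L1 - L2) \<inter> {a. \<not> Gz J a})"
      by (rule gen_dual[OF JP U(2) Jv IS_L2 IS_L1 L2_sub_L1 perpa trivb])
    then have "v \<le> card (T \<inter> {a. \<not> Gz J a})" unfolding U(4) L1_minus .
    then obtain K where K: "K \<subseteq> T \<inter> {a. \<not> Gz J a}" "card K = v"
      by (rule obtain_subset_with_card_n)
    have "Dperp m s K \<le> card (Dl \<inter> {a. \<not> Gz J a})"
      unfolding Dperp_def
    proof (rule card_mono)
      show "finite (Dl \<inter> {a. \<not> Gz J a})" using finite_Delta by simp
      show "{N \<in> Dl. \<exists>M\<in>K. mdvd N M} \<subseteq> Dl \<inter> {a. \<not> Gz J a}"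
      proof
        fix N assume N: "N \<in> {N \<in> Dl. \<exists>M\<in>K. mdvd N M}"
        then obtain M where M: "M \<in> K" "mdvd N M" "N \<in> Dl" by blast
        have "M \<in> Dl" using M K T_sub_L1 L1D by blast
        then have "\<not> Gz J N" using Gz_up[of J N M] M K by blast
        then show "N \<in> Dl \<inter> {a. \<not> Gz J a}" using M by blast
      qed
    qed
    also have "\<dots> \<le> card J"
      using card_split_G[of J] count_G[OF JP] card_Delta card_P card_mono[OF finite_P JP] by simp
    finally show "\<exists>y\<in>{Dperp m s K | K. K \<subseteq> T \<and> card K = v}. y \<le> x"
      using K U(1) J_def by blast
  qed
  show ?thesis unfolding RA
    by (rule Min_ge_from[OF finA neA B_props(1)[where F="Dperp m s", OF v] lower])
qed

lemma prod_split: "(\<Prod>t\<in>{1..m}. f t) = f 1 * f 2 * (\<Prod>t\<in>{3..m}. f t)"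
proof -
  have "{1..m} = insert 1 (insert 2 {3..m})" using m2 by auto
  then show ?thesis by (simp add: mult.assoc)
qed

lemma tau_rest: "(\<Prod>t\<in>{3..m}. g (tau w t)) = (\<Prod>t\<in>{3..m}. g (i t))"
  by (intro prod.cong) (auto simp: tau_def)

lemma Min1_primal: "Min {Dfoot m s K | K. K \<subseteq> T \<and> card K = 1} = (\<Prod>t\<in>{1..m}. s - i t)"
proof (rule Min_eqI)
  show "finite {Dfoot m s K | K. K \<subseteq> T \<and> card K = 1}" using B_props(1)[where F="Dfoot m s" and v=1] by simp
  show "(\<Prod>t\<in>{1..m}. s - i t) \<in> {Dfoot m s K | K. K \<subseteq> T \<and> card K = 1}"
  proof -
    have "i \<in> T" unfolding T_def using taud[symmetric] by auto
    then show ?thesis using Dfoot_single[OF iD] by (intro CollectI exI[of _ "{i}"]) auto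
  qed
  fix y assume "y \<in> {Dfoot m s K | K. K \<subseteq> T \<and> card K = 1}"
  then obtain K where K: "K \<subseteq> T" "card K = 1" "y = Dfoot m s K" by blast
  then obtain a where "K = {a}" by (auto simp: card_1_singleton_iff)
  then have a: "a \<in> T" "y = Dfoot m s {a}" using K by auto
  then obtain w where w: "w \<le> d" "a = tau w" by (auto simp: T_def)
  have "y = (\<Prod>t\<in>{1..m}. s - tau w t)" using a w Dfoot_single tau_D by simp
  also have "\<dots> = (s - (i 2 - w)) * (s - (i 1 + w)) * (\<Prod>t\<in>{3..m}. s - i t)"
    unfolding prod_split[of "\<lambda>t. s - tau w t"] tau_rest[of "\<lambda>x. s - x" w] by (simp add: tau_def)
  finally have y: "y = (s - (i 2 - w)) * (s - (i 1 + w)) * (\<Prod>t\<in>{3..m}. s - i t)" .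
  have "(s - i 1) * (s - i 2) \<le> (s - (i 2 - w)) * (s - (i 1 + w))"
    using ar1[OF i12 i_lt(2)] w by (simp add: d_def)
  then have "(s - i 1) * (s - i 2) * (\<Prod>t\<in>{3..m}. s - i t) \<le> y" unfolding y by (rule mult_right_mono) simp
  then show "(\<Prod>t\<in>{1..m}. s - i t) \<le> y" unfolding prod_split[of "\<lambda>t. s - i t"] .
qed

lemma Min1_dual: "(\<Prod>t\<in>{1..m}. i t + 1) \<le> Min {Dperp m s K | K. K \<subseteq> T \<and> card K = 1}"
proof -
  have all: "\<forall>y\<in>{Dperp m s K | K. K \<subseteq> T \<and> card K = 1}. (\<Prod>t\<in>{1..m}. i t + 1) \<le> y"
  proof
    fix y assume "y \<in> {Dperp m s K | K. K \<subseteq> T \<and> card K = 1}"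
    then obtain K where K: "K \<subseteq> T" "card K = 1" "y = Dperp m s K" by blast
    then obtain a where "K = {a}" by (auto simp: card_1_singleton_iff)
    then have a: "a \<in> T" "y = Dperp m s {a}" using K by auto
    then obtain w where w: "w \<le> d" "a = tau w" by (auto simp: T_def)
    have "y = (\<Prod>t\<in>{1..m}. tau w t + 1)" using a w Dperp_single tau_D by simp
    also have "\<dots> = (i 2 - w + 1) * (i 1 + w + 1) * (\<Prod>t\<in>{3..m}. i t + 1)"
      unfolding prod_split[of "\<lambda>t. tau w t + 1"] tau_rest[of "\<lambda>x. x + 1" w] by (simp add: tau_def)
    finally have y: "y = (i 2 - w + 1) * (i 1 + w + 1) * (\<Prod>t\<in>{3..m}. i t + 1)" .
    have "(i 1 + 1) * (i 2 + 1) \<le> (i 2 - w + 1) * (i 1 + w + 1)"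
      using ar2[OF i12] w by (simp add: d_def)
    then have "(i 1 + 1) * (i 2 + 1) * (\<Prod>t\<in>{3..m}. i t + 1) \<le> y" unfolding y by (rule mult_right_mono) simp
    then show "(\<Prod>t\<in>{1..m}. i t + 1) \<le> y" unfolding prod_split[of "\<lambda>t. i t + 1"] .
  qed
  then show ?thesis using B_props[where F="Dperp m s" and v=1] by (simp add: Min_ge_iff)
qed

lemma main_result:
  "card P = s ^ m
    \<and> evcode m S L2 \<subseteq> evcode m S L1
    \<and> fdim (evcode m S L1) = fdim (evcode m S L2) + (d + 1)
    \<and> RGHW 1 (evcode m S L1) (evcode m S L2) = (\<Prod>t\<in>{1..m}. s - i t)
    \<and> RGHW 1 (dualcode P (evcode m S L2)) (dualcode P (evcode m S L1)) \<ge> (\<Prod>t\<in>{1..m}. i t + 1)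
    \<and> (\<forall>v\<in>{2..d + 1}.
         RGHW v (evcode m S L1) (evcode m S L2) = Min {Dfoot m s K | K. K \<subseteq> T \<and> card K = v}
       \<and> RGHW v (dualcode P (evcode m S L2)) (dualcode P (evcode m S L1))
           \<ge> Min {Dperp m s K | K. K \<subseteq> T \<and> card K = v})"
proof (intro conjI ballI)
  show "card P = s ^ m" by (rule card_P)
  show "evcode m S L2 \<subseteq> evcode m S L1"
    unfolding evcode_def using L2_sub_L1 by (intro fv.span_mono image_mono)
  have "card L1 = card L2 + card T"
    using L1_eq T_L2 finite_T finite_subset[OF L2D finite_Delta] by (simp add: card_Un_disjoint Int_commute)
  then show "fdim (evcode m S L1) = fdim (evcode m S L2) + (d + 1)"
    using fdim_CL[OF L1D] fdim_CL[OF L2D] card_T by simp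
  show "RGHW 1 (evcode m S L1) (evcode m S L2) = (\<Prod>t\<in>{1..m}. s - i t)"
    using primal_eq[of 1] Min1_primal by simp
  show "RGHW 1 (dualcode P (evcode m S L2)) (dualcode P (evcode m S L1)) \<ge> (\<Prod>t\<in>{1..m}. i t + 1)"
    using dual_ge[of 1] Min1_dual by simp
  fix v assume v: "v \<in> {2..d + 1}"
  show "RGHW v (evcode m S L1) (evcode m S L2) = Min {Dfoot m s K | K. K \<subseteq> T \<and> card K = v}"
    using primal_eq v by simp
  show "RGHW v (dualcode P (evcode m S L2)) (dualcode P (evcode m S L1))
           \<ge> Min {Dperp m s K | K. K \<subseteq> T \<and> card K = v}"
    using dual_ge v by simp
qed

end


theorem mainTheorem7:
  fixes S :: "nat \<Rightarrow> 'a::{field,finite} set"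
    and m s :: nat and i :: "nat \<Rightarrow> nat"
  assumes m2: "m \<ge> 2"
    and cardS: "\<forall>t\<in>{1..m}. card (S t) = s"
    and iD: "i \<in> Delta m s"
    and i12: "i 1 \<le> i 2"
  defines "L1 \<equiv> {N \<in> Delta m s. deglex_le m N i}"
    and "L2 \<equiv> {N \<in> Delta m s. deglex_less m N (i(1 := i 2, 2 := i 1))}"
    and "l \<equiv> i 2 - i 1 + 1"
    and "T \<equiv> {i(1 := i 2 - w, 2 := i 1 + w) | w. w \<in> {0..i 2 - i 1}}"
    and "P \<equiv> points m S"
  shows "card P = s ^ m
    \<and> evcode m S L2 \<subseteq> evcode m S L1
    \<and> fdim (evcode m S L1) = fdim (evcode m S L2) + l
    \<and> RGHW 1 (evcode m S L1) (evcode m S L2) = (\<Prod>t\<in>{1..m}. s - i t)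
    \<and> RGHW 1 (dualcode P (evcode m S L2)) (dualcode P (evcode m S L1)) \<ge> (\<Prod>t\<in>{1..m}. i t + 1)
    \<and> (\<forall>v\<in>{2..l}.
         RGHW v (evcode m S L1) (evcode m S L2) = Min {Dfoot m s K | K. K \<subseteq> T \<and> card K = v}
       \<and> RGHW v (dualcode P (evcode m S L2)) (dualcode P (evcode m S L1))
           \<ge> Min {Dperp m s K | K. K \<subseteq> T \<and> card K = v})"
proof -
  have "i 1 < s" using iD m2 by (auto simp: Delta_def)
  then have spos: "0 < s" by simp
  interpret ts: thm_setting m s S i
    by unfold_locales (use cardS spos m2 iD i12 in auto)
  have R: ?thesis if "L1 = ts.L1" "L2 = ts.L2" "l = ts.d + 1" "T = ts.T" "P = points m S"
    using ts.main_result unfolding that by simp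
  show ?thesis
    by (rule R) (simp_all add: L1_def L2_def l_def T_def P_def ts.L1_def ts.L2_def ts.i'_def ts.d_def ts.T_def ts.tau_def)
qed


end
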